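(* Let $0<\varepsilon\le1$, $\alpha\in(0,1)$, $\xi(x)=e^{-\alpha x^2/(2\sqrt\varepsilon)}$ and $f_{2m+1}=x^{2m+1}\xi$ for $m\in\{0,1,2,\dots\}$. Then $f_{2m+1}\in D(S^*_\varepsilon)$, $$S^*_\varepsilon f_{2m+1}=-\frac{i}{2\sqrt\varepsilon}\,\Lambda_m(x,\alpha)\,x\,\xi(x),$$ and, for all $n,m\ge0$, $$(f_{2n+1},S^*_\varepsilon f_{2m+1})=-\frac{i}{2\sqrt\varepsilon}\int_{\mathbb R}\xi(x)\,x^{2n+2}\Lambda_m(x,\alpha)\,\xi(x)\,dx.$$
   Context: Work in $L^2(\mathbb{R})$ with $(f,g)=\int\overline fg\,dx$. Let $q$ be multiplication by $x$, $p=-i\,d/dx$, $t=q^{-1}p$ with $D(t)=\{f\in D(p):pf\in D(q^{-1})\}$, $t^*$ its adjoint, $L^2_1$ the odd subspace. Define $S^*_\varepsilon$ (notation only, not an adjoint) in $L^2_1$ by $D(S^*_\varepsilon)=\{f\in L^2_1\cap\bigcap_nD((t^* )^{2n+1}):\sum_{n=0}^N\frac{(-1)^n}{2n+1}(\sqrt\varepsilon t^* )^{2n+1}f$ converges in norm$\}$, $S^*_\varepsilon f=-\varepsilon^{-1/2}\sum_{n\ge0}\frac{(-1)^n}{2n+1}(\sqrt\varepsilon t^* )^{2n+1}f$. For $k\ge0$, $\Lambda_k(x,\alpha)=\big(x^2-2\sqrt\varepsilon\frac{\partial}{\partial\alpha}\big)^k\log\frac{1+\alpha}{1-\alpha}$,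 the operator acting in $\alpha$ with $x$ as a parameter. *)

theory Defs
  imports "HOL-Analysis.Analysis"
begin

text \<open>Elements of L^2(R) are represented by Borel measurable complex-valued functions
  with square-integrable modulus; operators are represented by their graphs (relations),
  closed under almost-everywhere equality of representatives.\<close>

definition L2 :: "(real \<Rightarrow> complex) set" where
  "L2 = {f. f \<in> borel_measurable lborel \<and> integrable lborel (\<lambda>x. (cmod (f x))\<^sup>2)}"

definition inner_L2 :: "(real \<Rightarrow> complex) \<Rightarrow> (real \<Rightarrow> complex) \<Rightarrow> complex" where
  "inner_L2 f g = (LINT x|lborel. cnj (f x) * g x)"

definition norm_L2 :: "(real \<Rightarrow> complex) \<Rightarrow> real" where
  "norm_L2 f = sqrt (LINT x|lborel. (cmod (f x))\<^sup>2)"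

definition L2_odd :: "(real \<Rightarrow> complex) set" where
  "L2_odd = {f \<in> L2. AE x in lborel. f (- x) = - f x}"

definition test_fun :: "(real \<Rightarrow> real) \<Rightarrow> bool" where
  "test_fun \<phi> \<longleftrightarrow> (\<forall>k x. ((deriv ^^ k) \<phi>) field_differentiable (at x)) \<and> bounded {x. \<phi> x \<noteq> 0}"

text \<open>Graph of p = -i d/dx on its maximal domain (weak derivative in L^2):
  p_rel f g means f \<in> D(p) and p f = g.\<close>
definition p_rel :: "(real \<Rightarrow> complex) \<Rightarrow> (real \<Rightarrow> complex) \<Rightarrow> bool" where
  "p_rel f g \<longleftrightarrow> f \<in> L2 \<and> g \<in> L2 \<and>
     (\<forall>\<phi>. test_fun \<phi> \<longrightarrow>
        (LINT x|lborel. f x * of_real (deriv \<phi> x)) = - (LINT x|lborel. \<i> * g x * of_real (\<phi> x)))"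

text \<open>Graph of t = q^{-1} p, D(t) = {f \<in> D(p). p f \<in> D(q^{-1})}.\<close>
definition t_rel :: "(real \<Rightarrow> complex) \<Rightarrow> (real \<Rightarrow> complex) \<Rightarrow> bool" where
  "t_rel f h \<longleftrightarrow> (\<exists>g. p_rel f g \<and> (\<lambda>x. g x / of_real x) \<in> L2 \<and>
      h \<in> L2 \<and> (AE x in lborel. h x = g x / of_real x))"

definition tstar_rel :: "(real \<Rightarrow> complex) \<Rightarrow> (real \<Rightarrow> complex) \<Rightarrow> bool" where
  "tstar_rel g h \<longleftrightarrow> g \<in> L2 \<and> h \<in> L2 \<and>
      (\<forall>f k. t_rel f k \<longrightarrow> inner_L2 g k = inner_L2 h f)"

primrec tstar_pow :: "nat \<Rightarrow> (real \<Rightarrow> complex) \<Rightarrow> (real \<Rightarrow> complex) \<Rightarrow> bool" where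
  "tstar_pow 0 f g \<longleftrightarrow> f \<in> L2 \<and> g \<in> L2 \<and> (AE x in lborel. g x = f x)"
| "tstar_pow (Suc n) f g \<longleftrightarrow> (\<exists>h. tstar_pow n f h \<and> tstar_rel h g)"

text \<open>Graph of S^*_eps: f \<in> L^2_1 \<inter> \<Inter>_n D((t^*)^{2n+1}), the partial sums
  \<Sum>_{n\<le>N} (-1)^n/(2n+1) (\<surd>eps t^*)^{2n+1} f converge in norm to s, and
  S^*_eps f = -eps^{-1/2} s.\<close>
definition S_rel :: "real \<Rightarrow> (real \<Rightarrow> complex) \<Rightarrow> (real \<Rightarrow> complex) \<Rightarrow> bool" where
  "S_rel \<epsilon> f h \<longleftrightarrow> f \<in> L2_odd \<and> h \<in> L2 \<and>
     (\<exists>G. (\<forall>n. tstar_pow (2*n+1) f (G n)) \<and>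
       (\<exists>s\<in>L2.
          (\<lambda>N. norm_L2 (\<lambda>x. (\<Sum>n\<le>N. of_real ((-1)^n / real (2*n+1) * sqrt \<epsilon> ^ (2*n+1)) * G n x) - s x))
            \<longlonglongrightarrow> 0
          \<and> (AE x in lborel. h x = - of_real (1 / sqrt \<epsilon>) * s x)))"

primrec Lambda :: "real \<Rightarrow> nat \<Rightarrow> real \<Rightarrow> real \<Rightarrow> real" where
  "Lambda \<epsilon> 0 = (\<lambda>x a. ln ((1 + a) / (1 - a)))"
| "Lambda \<epsilon> (Suc k) = (\<lambda>x a. x\<^sup>2 * Lambda \<epsilon> k x a - 2 * sqrt \<epsilon> * deriv (\<lambda>b. Lambda \<epsilon> k x b) a)"

end

theory Submission
  imports Defs "HOL-Probability.Probability"
begin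

coinductive smooth :: "(real \<Rightarrow> real) \<Rightarrow> bool" where
  smoothI: "(\<And>x. (u has_real_derivative u' x) (at x)) \<Longrightarrow> smooth u' \<Longrightarrow> smooth u"

inductive sgen :: "(real \<Rightarrow> real) \<Rightarrow> bool" where
  sg_base: "smooth u \<Longrightarrow> sgen u"
| sg_add: "sgen u \<Longrightarrow> sgen v \<Longrightarrow> sgen (\<lambda>x. u x + v x)"
| sg_mult: "sgen u \<Longrightarrow> sgen v \<Longrightarrow> sgen (\<lambda>x. u x * v x)"
| sg_comp: "smooth g \<Longrightarrow> smooth q \<Longrightarrow> sgen (\<lambda>x. g (q x))"

lemma sgen_deriv: "sgen u \<Longrightarrow> \<exists>u'. (\<forall>x. (u has_real_derivative u' x) (at x)) \<and> sgen u'"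
proof (induction rule: sgen.induct)
  case (sg_base u)
  from sg_base obtain u' where "\<And>x. (u has_real_derivative u' x) (at x)" "smooth u'"
    by (cases rule: smooth.cases) auto
  then show ?case by (intro exI[of _ u']) (auto intro: sgen.sg_base)
next
  case (sg_add u v)
  then obtain u' v' where "\<forall>x. (u has_real_derivative u' x) (at x)" "sgen u'"
     "\<forall>x. (v has_real_derivative v' x) (at x)" "sgen v'" by blast
  then show ?case
    using sgen.sg_add[of u' v'] by (intro exI[of _ "\<lambda>x. u' x + v' x"]) (auto intro!: derivative_intros)
next
  case (sg_mult u v)
  then obtain u' v' where "\<forall>x. (u has_real_derivative u' x) (at x)" "sgen u'"
     "\<forall>x. (v has_real_derivative v' x) (at x)" "sgen v'" by blast
  then show ?case
    using sg_mult.hyps by (intro exI[of _ "\<lambda>x. u' x * v x + v' x * u x"]) (auto intro!: DERIV_mult sgen.sg_add sgen.sg_mult)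
next
  case (sg_comp g q)
  from sg_comp(1) obtain g' where g: "\<And>x. (g has_real_derivative g' x) (at x)" "smooth g'"
    by (cases rule: smooth.cases) auto
  from sg_comp(2) obtain q' where q: "\<And>x. (q has_real_derivative q' x) (at x)" "smooth q'"
    by (cases rule: smooth.cases) auto
  have "sgen (\<lambda>x. g' (q x) * q' x)"
    by (rule sgen.sg_mult[OF sgen.sg_comp[OF g(2) sg_comp(2)] sgen.sg_base[OF q(2)]])
  then show ?case
    by (intro exI[of _ "\<lambda>x. g' (q x) * q' x"]) (auto intro!: DERIV_chain2[OF g(1) q(1)])
qed

lemma sgen_smooth: "sgen u \<Longrightarrow> smooth u"
proof (coinduction arbitrary: u rule: smooth.coinduct)
  case (smooth u)
  then obtain u' where "\<forall>x. (u has_real_derivative u' x) (at x)" "sgen u'"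
    using sgen_deriv by blast
  then show ?case by blast
qed

lemma smooth_add: "smooth u \<Longrightarrow> smooth v \<Longrightarrow> smooth (\<lambda>x. u x + v x)"
  by (rule sgen_smooth, rule sg_add; rule sg_base)
lemma smooth_mult: "smooth u \<Longrightarrow> smooth v \<Longrightarrow> smooth (\<lambda>x. u x * v x)"
  by (rule sgen_smooth, rule sg_mult; rule sg_base)
lemma smooth_comp: "smooth g \<Longrightarrow> smooth q \<Longrightarrow> smooth (\<lambda>x. g (q x))"
  by (rule sgen_smooth, rule sg_comp)

lemma smooth_const: "smooth (\<lambda>x. c)"
proof -
  have z: "smooth (\<lambda>x::real. 0::real)"
    by (coinduction rule: smooth.coinduct) (auto intro!: exI[of _ "\<lambda>x. 0"])
  show ?thesis by (rule smoothI[of _ "\<lambda>x. 0"]) (auto intro: z)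
qed

lemma smooth_id: "smooth (\<lambda>x. x)"
  by (rule smoothI[of _ "\<lambda>x. 1"]) (auto intro: smooth_const)

lemma smooth_exp: "smooth exp"
  by (coinduction rule: smooth.coinduct) (auto intro: DERIV_exp)

lemma smooth_uminus: "smooth u \<Longrightarrow> smooth (\<lambda>x. - u x)"
  using smooth_mult[OF smooth_const[of "-1"]] by simp

lemma smooth_diff: "smooth u \<Longrightarrow> smooth v \<Longrightarrow> smooth (\<lambda>x. u x - v x)"
  using smooth_add[OF _ smooth_uminus] by simp

lemma smooth_cmult: "smooth u \<Longrightarrow> smooth (\<lambda>x. c * u x)"
  using smooth_mult[OF smooth_const] by simp

lemma smooth_power: "smooth u \<Longrightarrow> smooth (\<lambda>x. u x ^ n)"
  by (induction n) (auto intro: smooth_const smooth_mult)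

lemma smooth_D: "smooth u \<Longrightarrow> \<exists>u'. (\<forall>x. (u has_real_derivative u' x) (at x)) \<and> smooth u'"
  by (cases rule: smooth.cases) auto

lemma smooth_deriv: "smooth u \<Longrightarrow> smooth (deriv u)"
proof -
  assume "smooth u"
  then obtain u' where "\<forall>x. (u has_real_derivative u' x) (at x)" "smooth u'"
    using smooth_D by blast
  moreover then have "deriv u = u'" using DERIV_imp_deriv by blast
  ultimately show ?thesis by simp
qed

lemma smooth_derivs: "smooth u \<Longrightarrow> smooth ((deriv ^^ k) u)"
  by (induction k) (auto intro: smooth_deriv)

lemma smooth_differentiable: "smooth u \<Longrightarrow> u field_differentiable (at x)"
  using smooth_D unfolding field_differentiable_def by blast

lemma smooth_test_fun: "smooth u \<Longrightarrow> bounded {x. u x \<noteq> 0} \<Longrightarrow> test_fun u"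
  unfolding test_fun_def using smooth_derivs smooth_differentiable by blast

lemma smooth_deriv_eq: "smooth u \<Longrightarrow> (\<And>x. (u has_real_derivative u' x) (at x)) \<Longrightarrow> smooth u'"
proof -
  assume s: "smooth u" and d: "\<And>x. (u has_real_derivative u' x) (at x)"
  have "deriv u = u'" using d DERIV_imp_deriv by blast
  with smooth_deriv[OF s] show ?thesis by simp
qed

section \<open>The flat function\<close>

definition flatp :: "real poly \<Rightarrow> real \<Rightarrow> real" where
  "flatp p x = (if x > 0 then poly p (1/x) * exp (- 1/x) else 0)"

lemma lim_poly_exp: "((\<lambda>t. poly (r::real poly) t * exp (- t)) \<longlongrightarrow> 0) at_top"
proof -
  have "((\<lambda>t. \<Sum>i\<le>degree r. coeff r i * (t ^ i / exp t)) \<longlongrightarrow> 0) at_top"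
    by (intro tendsto_null_sum tendsto_mult_right_zero tendsto_power_div_exp_0)
  moreover have "(\<Sum>i\<le>degree r. coeff r i * (t ^ i / exp t)) = poly r t * exp (- t)" for t
    by (simp add: poly_altdef exp_minus divide_inverse sum_distrib_left mult_ac)
  ultimately show ?thesis by simp
qed

lemma lim_flat0: "((\<lambda>y. poly (r::real poly) (1/y) * exp (- 1/y)) \<longlongrightarrow> 0) (at_right 0)"
proof -
  have "((\<lambda>y. poly r (inverse y) * exp (- inverse y)) \<longlongrightarrow> 0) (at_right 0)"
    using filterlim_compose[OF lim_poly_exp filterlim_inverse_at_top_right] by simp
  then show ?thesis by (simp add: field_simps)
qed

lemma flatp_deriv: "(flatp p has_real_derivative flatp ([:0,0,1:] * (p - pderiv p)) x) (at x)"
proof -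
  consider "x > 0" | "x < 0" | "x = 0" by linarith
  then show ?thesis
  proof cases
    case 1
    have "((\<lambda>y. poly p (1/y) * exp (- 1/y)) has_real_derivative
        poly (pderiv p) (1/x) * (- 1 / x^2) * exp (- 1/x) + poly p (1/x) * (exp (- 1/x) * (1/x^2))) (at x)"
      using 1
      by (auto intro!: derivative_eq_intros DERIV_chain2[OF poly_DERIV] simp: power2_eq_square field_simps)
    then have "((\<lambda>y. poly p (1/y) * exp (- 1/y)) has_real_derivative flatp ([:0,0,1:] * (p - pderiv p)) x) (at x)"
      using 1 by (simp add: flatp_def poly_diff power2_eq_square field_simps)
    then show ?thesis
      by (rule has_field_derivative_transform_within_open[where S="{0<..}"]) (use 1 in \<open>auto simp: flatp_def\<close>)
  next
    case 2
    have "((\<lambda>y. 0) has_real_derivative flatp ([:0,0,1:] * (p - pderiv p)) x) (at x)"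
      using 2 by (simp add: flatp_def)
    then show ?thesis
      by (rule has_field_derivative_transform_within_open[where S="{..<0}"]) (use 2 in \<open>auto simp: flatp_def\<close>)
  next
    case 3
    have r: "((\<lambda>y. (flatp p y - flatp p 0) / (y - 0)) \<longlongrightarrow> 0) (at_right 0)"
    proof -
      have "((\<lambda>y. poly (pCons 0 p) (1/y) * exp (- 1/y)) \<longlongrightarrow> 0) (at_right 0)" by (rule lim_flat0)
      then show ?thesis
        by (rule Lim_transform_eventually)
           (auto simp: eventually_at_right_field flatp_def intro!: exI[of _ 1])
    qed
    have l: "((\<lambda>y. (flatp p y - flatp p 0) / (y - 0)) \<longlongrightarrow> 0) (at_left 0)"
      by (rule Lim_transform_eventually[of "\<lambda>y. 0"])
         (auto simp: eventually_at_left_field flatp_def intro!: exI[of _ "-1"])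
    have "((\<lambda>y. (flatp p y - flatp p 0) / (y - 0)) \<longlongrightarrow> 0) (at 0)"
      using filterlim_split_at[OF l r] by simp
    then show ?thesis using 3 by (simp add: has_field_derivative_iff flatp_def)
  qed
qed

lemma smooth_flatp: "smooth (flatp p)"
proof -
  have "\<exists>p. u = flatp p \<Longrightarrow> smooth u" for u
  proof (coinduction arbitrary: u rule: smooth.coinduct)
    case (smooth u)
    then obtain p where "u = flatp p" by blast
    then show ?case using flatp_deriv by blast
  qed
  then show ?thesis by blast
qed

definition hflat :: "real \<Rightarrow> real" where "hflat x = (if x > 0 then exp (- 1/x) else 0)"

lemma hflat_flatp: "hflat = flatp 1" by (auto simp: hflat_def flatp_def)
lemma smooth_hflat: "smooth hflat" by (simp add: hflat_flatp smooth_flatp)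
lemma hflat_nonneg: "0 \<le> hflat x" by (simp add: hflat_def)
lemma hflat_le1: "hflat x \<le> 1" by (simp add: hflat_def)
lemma hflat_pos: "x > 0 \<Longrightarrow> hflat x > 0" by (simp add: hflat_def)
lemma hflat_zero: "x \<le> 0 \<Longrightarrow> hflat x = 0" by (simp add: hflat_def)
lemma continuous_hflat: "continuous_on S hflat"
  using smooth_differentiable[OF smooth_hflat]
  by (meson field_differentiable_imp_continuous_at continuous_at_imp_continuous_on)

lemma borel_measurable_cnj'[measurable (raw)]:
  "f \<in> borel_measurable M \<Longrightarrow> (\<lambda>x. cnj (f x :: complex)) \<in> borel_measurable M"
  using measurable_compose[of f M borel cnj borel] borel_measurable_continuous_onI[OF continuous_on_cnj[OF continuous_on_id]]
  by auto

lemma L2I: "f \<in> borel_measurable lborel \<Longrightarrow> integrable lborel (\<lambda>x. (cmod (f x))\<^sup>2) \<Longrightarrow> f \<in> L2"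
  by (simp add: L2_def)
lemma L2_meas: "f \<in> L2 \<Longrightarrow> f \<in> borel_measurable borel"
  by (simp add: L2_def)
lemma L2_sq: "f \<in> L2 \<Longrightarrow> integrable lborel (\<lambda>x. (cmod (f x))\<^sup>2)"
  by (simp add: L2_def)

lemma L2_bound:
  assumes "f \<in> L2" "g \<in> borel_measurable lborel" "AE x in lborel. cmod (g x) \<le> cmod (f x)"
  shows "g \<in> L2"
proof (rule L2I[OF assms(2)])
  show "integrable lborel (\<lambda>x. (cmod (g x))\<^sup>2)"
  proof (rule Bochner_Integration.integrable_bound[OF L2_sq[OF assms(1)]])
    show "AE x in lborel. norm ((cmod (g x))\<^sup>2) \<le> norm ((cmod (f x))\<^sup>2)"
      using assms(3) by eventually_elim (auto intro!: power_mono)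
  qed (use assms(2) in measurable)
qed

lemma integrable_L2_mult:
  assumes "f \<in> L2" "g \<in> L2"
  shows "integrable lborel (\<lambda>x. f x * g x)"
proof (rule Bochner_Integration.integrable_bound)
  show "integrable lborel (\<lambda>x. ((cmod (f x))\<^sup>2 + (cmod (g x))\<^sup>2) / 2)"
    using L2_sq[OF assms(1)] L2_sq[OF assms(2)] by auto
  have [measurable]: "f \<in> borel_measurable borel" "g \<in> borel_measurable borel" using assms by (auto intro: L2_meas)
  show "(\<lambda>x. f x * g x) \<in> borel_measurable lborel" by measurable
  show "AE x in lborel. norm (f x * g x) \<le> norm (((cmod (f x))\<^sup>2 + (cmod (g x))\<^sup>2) / 2)"
  proof (intro AE_I2)
    fix x
    have "2 * (cmod (f x) * cmod (g x)) \<le> (cmod (f x))\<^sup>2 + (cmod (g x))\<^sup>2"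
      using sum_squares_bound[of "cmod (f x)" "cmod (g x)"] by (simp add: mult_ac)
    then show "norm (f x * g x) \<le> norm (((cmod (f x))\<^sup>2 + (cmod (g x))\<^sup>2) / 2)"
      by (simp add: norm_mult)
  qed
qed

lemma L2_cnj: "f \<in> L2 \<Longrightarrow> (\<lambda>x. cnj (f x)) \<in> L2"
proof -
  assume f: "f \<in> L2"
  have [measurable]: "f \<in> borel_measurable borel" using f by (auto intro: L2_meas)
  show ?thesis by (rule L2_bound[OF f]) auto
qed

lemma integrable_L2_inner: "f \<in> L2 \<Longrightarrow> g \<in> L2 \<Longrightarrow> integrable lborel (\<lambda>x. cnj (f x) * g x)"
  by (intro integrable_L2_mult L2_cnj)

lemma L2_add:
  assumes "f \<in> L2" "g \<in> L2"
  shows "(\<lambda>x. f x + g x) \<in> L2"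
proof (rule L2I)
  have [measurable]: "f \<in> borel_measurable borel" "g \<in> borel_measurable borel" using assms by (auto intro: L2_meas)
  show "(\<lambda>x. f x + g x) \<in> borel_measurable lborel" by measurable
  show "integrable lborel (\<lambda>x. (cmod (f x + g x))\<^sup>2)"
  proof (rule Bochner_Integration.integrable_bound)
    show "integrable lborel (\<lambda>x. 2 * (cmod (f x))\<^sup>2 + 2 * (cmod (g x))\<^sup>2)"
      using L2_sq[OF assms(1)] L2_sq[OF assms(2)] by auto
    show "(\<lambda>x. (cmod (f x + g x))\<^sup>2) \<in> borel_measurable lborel" by measurable
    show "AE x in lborel. norm ((cmod (f x + g x))\<^sup>2) \<le> norm (2 * (cmod (f x))\<^sup>2 + 2 * (cmod (g x))\<^sup>2)"
    proof (intro AE_I2)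
      fix x
      have a: "cmod (f x + g x) \<le> cmod (f x) + cmod (g x)" by (rule norm_triangle_ineq)
      have "(cmod (f x + g x))\<^sup>2 \<le> (cmod (f x) + cmod (g x))\<^sup>2"
        using a by (intro power_mono) auto
      also have "\<dots> \<le> 2 * (cmod (f x))\<^sup>2 + 2 * (cmod (g x))\<^sup>2"
        using sum_squares_bound[of "cmod (f x)" "cmod (g x)"] by (simp add: power2_eq_square algebra_simps)
      finally show "norm ((cmod (f x + g x))\<^sup>2) \<le> norm (2 * (cmod (f x))\<^sup>2 + 2 * (cmod (g x))\<^sup>2)"
        by simp
    qed
  qed
qed

lemma L2_cmult:
  assumes "f \<in> L2" shows "(\<lambda>x. c * f x) \<in> L2"
proof (rule L2I)
  have [measurable]: "f \<in> borel_measurable borel" using assms by (auto intro: L2_meas)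
  show "(\<lambda>x. c * f x) \<in> borel_measurable lborel" by measurable
  have "integrable lborel (\<lambda>x. (cmod c)\<^sup>2 * (cmod (f x))\<^sup>2)" using L2_sq[OF assms] by auto
  then show "integrable lborel (\<lambda>x. (cmod (c * f x))\<^sup>2)"
    by (simp add: norm_mult power_mult_distrib)
qed

lemma L2_zero: "(\<lambda>x. 0) \<in> L2" by (rule L2I) auto

lemma L2_uminus: "f \<in> L2 \<Longrightarrow> (\<lambda>x. - f x) \<in> L2"
  using L2_cmult[of f "-1"] by simp

lemma L2_diff: "f \<in> L2 \<Longrightarrow> g \<in> L2 \<Longrightarrow> (\<lambda>x. f x - g x) \<in> L2"
  using L2_add[OF _ L2_uminus] by simp

lemma L2_sum: "(\<And>i. i \<in> I \<Longrightarrow> F i \<in> L2) \<Longrightarrow> (\<lambda>x. \<Sum>i\<in>I. F i x) \<in> L2"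
proof (induction I rule: infinite_finite_induct)
  case (infinite A) then show ?case by (simp add: L2_zero)
next
  case empty then show ?case by (simp add: L2_zero)
next
  case (insert a A)
  then show ?case by (simp add: L2_add)
qed

lemma L2_cong_AE: "f \<in> L2 \<Longrightarrow> g \<in> borel_measurable lborel \<Longrightarrow> AE x in lborel. g x = f x \<Longrightarrow> g \<in> L2"
  by (rule L2_bound[of f]) (auto elim: AE_mp)

lemma inner_L2_cong_AE:
  assumes "f \<in> L2" "f' \<in> L2" "g \<in> L2" "g' \<in> L2"
  shows "AE x in lborel. f x = f' x \<Longrightarrow> AE x in lborel. g x = g' x \<Longrightarrow> inner_L2 f g = inner_L2 f' g'"
proof -
  have [measurable]: "f \<in> borel_measurable borel" "g \<in> borel_measurable borel" 
    "f' \<in> borel_measurable borel" "g' \<in> borel_measurable borel" using assms by (auto intro: L2_meas)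
  show "AE x in lborel. f x = f' x \<Longrightarrow> AE x in lborel. g x = g' x \<Longrightarrow> inner_L2 f g = inner_L2 f' g'"
    unfolding inner_L2_def by (rule integral_cong_AE) (auto elim!: AE_mp)
qed

section \<open>Gaussian moments\<close>

lemma integrable_gauss_abs:
  fixes c :: real assumes c: "c > 0"
  shows "integrable lborel (\<lambda>x. \<bar>x\<bar> ^ k * exp (- c * x\<^sup>2))"
proof -
  define \<sigma> where "\<sigma> = sqrt (1 / (2 * c))"
  have s: "\<sigma> > 0" using c by (simp add: \<sigma>_def)
  have s2: "2 * \<sigma>\<^sup>2 = 1 / c" using c by (simp add: \<sigma>_def)
  have i: "integrable lborel (\<lambda>x. sqrt (2 * pi * \<sigma>\<^sup>2) * (normal_density 0 \<sigma> x * \<bar>x - 0\<bar> ^ k))"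
    using integrable_normal_moment_abs[OF s, of 0 k] by (rule integrable_mult_right)
  have eq: "sqrt (2 * pi * \<sigma>\<^sup>2) * (normal_density 0 \<sigma> x * \<bar>x - 0\<bar> ^ k) = \<bar>x\<bar> ^ k * exp (- c * x\<^sup>2)" for x
  proof -
    have p: "sqrt (2 * pi * \<sigma>\<^sup>2) \<noteq> 0" using s by simp
    have e: "exp (- (x - 0)\<^sup>2 / (2 * \<sigma>\<^sup>2)) = exp (- c * x\<^sup>2)" by (simp add: s2)
    show ?thesis unfolding normal_density_def e using p by (simp add: field_simps)
  qed
  show ?thesis using i by (simp only: eq)
qed

lemma integrable_gauss:
  fixes c :: real assumes c: "c > 0"
  shows "integrable lborel (\<lambda>x. x ^ k * exp (- c * x\<^sup>2))"
  by (rule Bochner_Integration.integrable_bound[OF integrable_gauss_abs[OF c, of k]])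
     (auto simp: power_abs abs_mult)

lemma L2_gauss:
  fixes c :: real assumes c: "c > 0"
  shows "(\<lambda>x. complex_of_real (x ^ k * exp (- c * x\<^sup>2))) \<in> L2"
proof (rule L2I)
  show "(\<lambda>x. complex_of_real (x ^ k * exp (- c * x\<^sup>2))) \<in> borel_measurable lborel" by measurable
  have "integrable lborel (\<lambda>x. x ^ (2*k) * exp (- (2*c) * x\<^sup>2))"
    using integrable_gauss[of "2*c" "2*k"] c by simp
  moreover have "(cmod (complex_of_real (x ^ k * exp (- c * x\<^sup>2))))\<^sup>2 = x ^ (2*k) * exp (- (2*c) * x\<^sup>2)" for x
  proof -
    have "(cmod (complex_of_real (x ^ k * exp (- c * x\<^sup>2))))\<^sup>2 = (x ^ k * exp (- c * x\<^sup>2))\<^sup>2"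
      by (simp only: norm_of_real power2_abs)
    also have "\<dots> = x ^ (2*k) * (exp (- c * x\<^sup>2))\<^sup>2" by (simp add: power_mult_distrib power_mult mult.commute)
    also have "(exp (- c * x\<^sup>2))\<^sup>2 = exp (- (2*c) * x\<^sup>2)"
      by (simp add: power2_eq_square exp_add[symmetric])
    finally show ?thesis .
  qed
  ultimately show "integrable lborel (\<lambda>x. (cmod (complex_of_real (x ^ k * exp (- c * x\<^sup>2))))\<^sup>2)"
    by simp
qed

lemma integral_eq_zero_L2:
  assumes "w \<in> L2" "LINT x|lborel. (cmod (w x))\<^sup>2 = 0"
  shows "AE x in lborel. w x = 0"
proof -
  have "AE x in lborel. (cmod (w x))\<^sup>2 = 0"
    using integral_nonneg_eq_0_iff_AE[OF L2_sq[OF assms(1)]] assms(2) by auto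
  then show ?thesis by auto
qed

lemma L2_limit_unique:
  assumes P: "\<And>N. P N \<in> L2" and s: "s \<in> L2" and s': "s' \<in> L2"
    and l1: "(\<lambda>N. norm_L2 (\<lambda>x. P N x - s x)) \<longlonglongrightarrow> 0"
    and l2: "(\<lambda>N. norm_L2 (\<lambda>x. P N x - s' x)) \<longlonglongrightarrow> 0"
  shows "AE x in lborel. s x = s' x"
proof -
  have int: "\<And>f g. f \<in> L2 \<Longrightarrow> g \<in> L2 \<Longrightarrow> integrable lborel (\<lambda>x. (cmod (f x - g x))\<^sup>2)"
    using L2_sq L2_diff by blast
  have sq: "\<And>f g N. f \<in> L2 \<Longrightarrow> (norm_L2 (\<lambda>x. f x - g x))\<^sup>2 = (LINT x|lborel. (cmod (f x - g x))\<^sup>2)" 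
    unfolding norm_L2_def by (subst real_sqrt_pow2) (auto intro!: integral_nonneg_AE)
  have "(\<lambda>N. 2 * (norm_L2 (\<lambda>x. P N x - s x))\<^sup>2 + 2 * (norm_L2 (\<lambda>x. P N x - s' x))\<^sup>2) \<longlonglongrightarrow> 2 * 0\<^sup>2 + 2 * 0\<^sup>2"
    by (intro tendsto_intros l1 l2)
  then have L: "(\<lambda>N. 2 * (LINT x|lborel. (cmod (P N x - s x))\<^sup>2) + 2 * (LINT x|lborel. (cmod (P N x - s' x))\<^sup>2)) \<longlonglongrightarrow> 0"
    using sq[OF P] by simp
  have le: "(LINT x|lborel. (cmod (s x - s' x))\<^sup>2) \<le> 2 * (LINT x|lborel. (cmod (P N x - s x))\<^sup>2) + 2 * (LINT x|lborel. (cmod (P N x - s' x))\<^sup>2)" for N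
  proof -
    have "(LINT x|lborel. (cmod (s x - s' x))\<^sup>2) \<le> (LINT x|lborel. 2 * (cmod (P N x - s x))\<^sup>2 + 2 * (cmod (P N x - s' x))\<^sup>2)"
    proof (rule integral_mono)
      show "integrable lborel (\<lambda>x. (cmod (s x - s' x))\<^sup>2)" using int[OF s s'] .
      show "integrable lborel (\<lambda>x. 2 * (cmod (P N x - s x))\<^sup>2 + 2 * (cmod (P N x - s' x))\<^sup>2)"
        using int[OF P s] int[OF P s'] by auto
      fix x
      have a: "cmod (s x - s' x) \<le> cmod (P N x - s x) + cmod (P N x - s' x)"
        using norm_triangle_ineq4[of "P N x - s' x" "P N x - s x"] by (simp add: norm_minus_commute)
      have "(cmod (s x - s' x))\<^sup>2 \<le> (cmod (P N x - s x) + cmod (P N x - s' x))\<^sup>2"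
        using a by (intro power_mono) auto
      also have "\<dots> \<le> 2 * (cmod (P N x - s x))\<^sup>2 + 2 * (cmod (P N x - s' x))\<^sup>2"
        using sum_squares_bound[of "cmod (P N x - s x)" "cmod (P N x - s' x)"] by (simp add: power2_eq_square algebra_simps)
      finally show "(cmod (s x - s' x))\<^sup>2 \<le> 2 * (cmod (P N x - s x))\<^sup>2 + 2 * (cmod (P N x - s' x))\<^sup>2" .
    qed
    also have "\<dots> = 2 * (LINT x|lborel. (cmod (P N x - s x))\<^sup>2) + 2 * (LINT x|lborel. (cmod (P N x - s' x))\<^sup>2)"
      using int[OF P s] int[OF P s'] by simp
    finally show ?thesis .
  qed
  have "(LINT x|lborel. (cmod (s x - s' x))\<^sup>2) \<le> 0"
    by (rule tendsto_lowerbound[OF L always_eventually]) (use le in auto)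
  moreover have "(LINT x|lborel. (cmod (s x - s' x))\<^sup>2) \<ge> 0" by (intro integral_nonneg_AE) auto
  ultimately have "(LINT x|lborel. (cmod (s x - s' x))\<^sup>2) = 0" by linarith
  then have "AE x in lborel. s x - s' x = 0"
    using integral_eq_zero_L2[OF L2_diff[OF s s']] by simp
  then show ?thesis by auto
qed

definition ccs :: "(real \<Rightarrow> real) \<Rightarrow> bool" where
  "ccs g \<longleftrightarrow> (\<forall>x. isCont g x) \<and> (\<exists>M. \<forall>x. M < \<bar>x\<bar> \<longrightarrow> g x = 0)"

lemma cont_meas: "(\<And>x. isCont g x) \<Longrightarrow> (g::real\<Rightarrow>real) \<in> borel_measurable borel"
  by (intro borel_measurable_continuous_onI continuous_at_imp_continuous_on) auto

lemma ccs_meas: "ccs g \<Longrightarrow> g \<in> borel_measurable borel"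
  unfolding ccs_def using cont_meas by blast

lemma ccs_integrable:
  assumes "ccs g" shows "integrable lborel g"
proof -
  obtain M where M: "\<And>x. M < \<bar>x\<bar> \<Longrightarrow> g x = 0" and c: "\<And>x. isCont g x"
    using assms unfolding ccs_def by blast
  have "integrable lborel (\<lambda>x. g x * indicator {-\<bar>M\<bar>..\<bar>M\<bar>} x)"
    using c by (intro borel_integrable_atLeastAtMost) auto
  moreover have "g x * indicator {-\<bar>M\<bar>..\<bar>M\<bar>} x = g x" for x
  proof (cases "\<bar>x\<bar> \<le> \<bar>M\<bar>")
    case True then show ?thesis by (simp add: indicator_def abs_le_iff)
  next
    case False then have "M < \<bar>x\<bar>" by linarith
    with M show ?thesis by simp
  qed
  ultimately show ?thesis by simp
qed

lemma ccs_mult: "ccs g \<Longrightarrow> (\<And>x. isCont h x) \<Longrightarrow> ccs (\<lambda>x. h x * g x)"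
  unfolding ccs_def by (auto intro!: continuous_intros)

lemma ccs_add: "ccs g \<Longrightarrow> ccs h \<Longrightarrow> ccs (\<lambda>x. h x + g x)"
  unfolding ccs_def
proof (safe, goal_cases)
  case (1 x M1 M2) then show ?case by (auto intro!: continuous_intros)
next
  case (2 M1 M2) then show ?case by (intro exI[of _ "max M1 M2"]) auto
qed

lemma ccs_L2: "ccs g \<Longrightarrow> (\<lambda>x. complex_of_real (g x)) \<in> L2"
proof -
  assume g: "ccs g"
  have [measurable]: "g \<in> borel_measurable borel" using ccs_meas[OF g] .
  have "ccs (\<lambda>x. g x * g x)" using ccs_mult[OF g] g unfolding ccs_def by blast
  then have "integrable lborel (\<lambda>x. g x * g x)" by (rule ccs_integrable)
  then show ?thesis by (intro L2I) (auto simp: power2_eq_square)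
qed

lemma bounded_cont_supp:
  fixes g :: "real \<Rightarrow> real" and M :: real
  assumes "\<And>x. isCont g x" "\<And>x. M < \<bar>x\<bar> \<Longrightarrow> g x = 0"
  shows "\<exists>K\<ge>0. \<forall>x. \<bar>g x\<bar> \<le> (K::real)"
proof -
  have "compact (g ` {-\<bar>M\<bar>..\<bar>M\<bar>})"
    using assms(1) by (intro compact_continuous_image continuous_at_imp_continuous_on) auto
  then obtain K where K: "\<And>y. y \<in> g ` {-\<bar>M\<bar>..\<bar>M\<bar>} \<Longrightarrow> norm y \<le> K"
    using compact_imp_bounded bounded_iff by metis
  show ?thesis
  proof (intro exI[of _ "max K 0"] conjI allI)
    fix x show "\<bar>g x\<bar> \<le> max K 0"
    proof (cases "\<bar>x\<bar> \<le> \<bar>M\<bar>")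
      case True then show ?thesis using K[of "g x"] by (auto simp: abs_le_iff)
    next
      case False then show ?thesis using assms(2)[of x] by auto
    qed
  qed simp
qed

lemma deriv_zero_on_open:
  assumes "(u has_real_derivative D) (at x)" "open S" "x \<in> S" "\<And>y. y \<in> S \<Longrightarrow> u y = 0"
  shows "D = 0"
proof -
  have "((\<lambda>y. 0) has_real_derivative 0) (at x)" by simp
  then have "(u has_real_derivative 0) (at x)"
    by (rule has_field_derivative_transform_within_open[OF _ assms(2,3)]) (use assms(4) in auto)
  then show ?thesis using DERIV_unique assms(1) by blast
qed

lemma deriv_zero_outside:
  assumes "(u has_real_derivative D) (at x)" "\<And>y. M < \<bar>y\<bar> \<Longrightarrow> u y = 0" "M < \<bar>x\<bar>"
  shows "D = 0"
proof (rule deriv_zero_on_open[OF assms(1)])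
  show "open {y::real. M < \<bar>y\<bar>}" by (intro open_Collect_less continuous_intros)
qed (use assms in auto)

lemma smooth_cont: "smooth u \<Longrightarrow> isCont u x"
  using smooth_differentiable field_differentiable_imp_continuous_at by blast

lemma test_fun_D:
  assumes "test_fun \<phi>"
  shows "\<And>x. (\<phi> has_real_derivative deriv \<phi> x) (at x)" "\<And>x. isCont (deriv \<phi>) x" "\<And>x. isCont \<phi> x"
    "\<exists>M. \<forall>x. M < \<bar>x\<bar> \<longrightarrow> \<phi> x = 0"
proof -
  have d: "\<And>k x. ((deriv ^^ k) \<phi>) field_differentiable (at x)" and b: "bounded {x. \<phi> x \<noteq> 0}"
    using assms unfolding test_fun_def by auto
  show "\<And>x. (\<phi> has_real_derivative deriv \<phi> x) (at x)"
    using d[of 0] by (simp add: DERIV_deriv_iff_field_differentiable)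
  show "\<And>x. isCont (deriv \<phi>) x"
    using d[of 1] by (simp add: field_differentiable_imp_continuous_at)
  show "\<And>x. isCont \<phi> x"
    using d[of 0] by (simp add: field_differentiable_imp_continuous_at)
  from b obtain M where "\<And>x. \<phi> x \<noteq> 0 \<Longrightarrow> norm x \<le> M" unfolding bounded_iff by auto
  then show "\<exists>M. \<forall>x. M < \<bar>x\<bar> \<longrightarrow> \<phi> x = 0" by (intro exI[of _ M]) force
qed

lemma p_rel_smooth_cs:
  assumes su: "smooth u" and du: "\<And>x. (u has_real_derivative u' x) (at x)"
    and M: "\<And>x. M < \<bar>x\<bar> \<Longrightarrow> u x = 0"
  shows "p_rel (\<lambda>x. complex_of_real (u x)) (\<lambda>x. - \<i> * complex_of_real (u' x))"
proof -
  have su': "smooth u'" using smooth_deriv_eq[OF su du] .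
  have cu: "\<And>x. isCont u x" and cu': "\<And>x. isCont u' x" using smooth_cont su su' by auto
  have M': "\<And>x. M < \<bar>x\<bar> \<Longrightarrow> u' x = 0" by (rule deriv_zero_outside[OF du M])
  have ccu: "ccs u" and ccu': "ccs u'" unfolding ccs_def using cu cu' M M' by blast+
  have L2u': "(\<lambda>x. - \<i> * complex_of_real (u' x)) \<in> L2"
    using L2_cmult[OF ccs_L2[OF ccu'], of "-\<i>"] .
  show ?thesis unfolding p_rel_def
  proof (intro conjI allI impI ccs_L2 ccu L2u')
    fix \<phi> assume t: "test_fun \<phi>"
    note tD = test_fun_D[OF t]
    define M1 where "M1 = \<bar>M\<bar> + 1"
    have int1: "integrable lborel (\<lambda>x. u x * deriv \<phi> x)" using ccs_integrable[OF ccs_mult[OF ccu tD(2)]]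
      by (simp add: mult.commute)
    have int2: "integrable lborel (\<lambda>x. u' x * \<phi> x)" using ccs_integrable[OF ccs_mult[OF ccu' tD(3)]]
      by (simp add: mult.commute)
    have FTC: "(LBINT x. indicat_real {-M1..M1} x *\<^sub>R (u' x * \<phi> x + deriv \<phi> x * u x))
        = u M1 * \<phi> M1 - u (-M1) * \<phi> (-M1)"
    proof (rule integral_FTC_atLeastAtMost[where F="\<lambda>x. u x * \<phi> x"])
      show "- M1 \<le> M1" by (simp add: M1_def)
      fix x
      show "((\<lambda>x. u x * \<phi> x) has_vector_derivative u' x * \<phi> x + deriv \<phi> x * u x) (at x within {- M1..M1})"
        using DERIV_mult[OF du tD(1)] by (simp add: has_real_derivative_iff_has_vector_derivative[symmetric] has_field_derivative_at_within)
    next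
      show "continuous_on {- M1..M1} (\<lambda>x. u' x * \<phi> x + deriv \<phi> x * u x)"
        using cu cu' tD by (intro continuous_at_imp_continuous_on ballI continuous_intros) auto
    qed
    have "u M1 = 0" "u (-M1) = 0" using M[of M1] M[of "-M1"] by (auto simp: M1_def)
    then have FTC0: "(LBINT x. indicat_real {-M1..M1} x *\<^sub>R (u' x * \<phi> x + deriv \<phi> x * u x)) = 0"
      using FTC by simp
    have "(LBINT x. indicat_real {-M1..M1} x *\<^sub>R (u' x * \<phi> x + deriv \<phi> x * u x))
        = (LBINT x. u' x * \<phi> x + u x * deriv \<phi> x)"
    proof (rule Bochner_Integration.integral_cong[OF refl])
      fix x
      show "indicat_real {-M1..M1} x *\<^sub>R (u' x * \<phi> x + deriv \<phi> x * u x) = u' x * \<phi> x + u x * deriv \<phi> x"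
        using M[of x] M'[of x] by (cases "\<bar>x\<bar> \<le> M1") (auto simp: indicator_def abs_le_iff M1_def)
    qed
    also have "\<dots> = (LBINT x. u' x * \<phi> x) + (LBINT x. u x * deriv \<phi> x)"
      using int1 int2 by simp
    finally have R: "(LBINT x. u x * deriv \<phi> x) = - (LBINT x. u' x * \<phi> x)" using FTC0 by simp
    have "(LINT x|lborel. complex_of_real (u x) * complex_of_real (deriv \<phi> x))
        = complex_of_real (LBINT x. u x * deriv \<phi> x)"
      by (simp flip: integral_complex_of_real)
    also have "\<dots> = - complex_of_real (LBINT x. u' x * \<phi> x)" using R by simp
    also have "complex_of_real (LBINT x. u' x * \<phi> x) = (LINT x|lborel. \<i> * (- \<i> * complex_of_real (u' x)) * complex_of_real (\<phi> x))"
      by (simp flip: integral_complex_of_real)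
    finally show "(LINT x|lborel. complex_of_real (u x) * complex_of_real (deriv \<phi> x))
       = - (LINT x|lborel. \<i> * (- \<i> * complex_of_real (u' x)) * complex_of_real (\<phi> x))" .
  qed
qed

definition chi :: "real \<Rightarrow> real" where "chi y = exp 1 * hflat (1 - y\<^sup>2)"

lemma smooth_chi: "smooth chi"
  unfolding chi_def
  by (intro smooth_cmult smooth_comp[OF smooth_hflat] smooth_diff smooth_const smooth_power smooth_id)

lemma chi_0: "chi 0 = 1" by (simp add: chi_def hflat_def exp_minus)

lemma chi_bounds: "0 \<le> chi y" "chi y \<le> 1"
proof -
  show "0 \<le> chi y" by (simp add: chi_def hflat_nonneg)
  show "chi y \<le> 1"
  proof (cases "1 - y\<^sup>2 > 0")
    case True
    then have "1 / (1 - y\<^sup>2) \<ge> 1"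
      by (simp add: le_divide_eq)
    then have "exp 1 * exp (- 1 / (1 - y\<^sup>2)) \<le> 1"
      by (simp add: exp_add[symmetric] exp_le_one_iff) 
    then show ?thesis using True by (simp add: chi_def hflat_def)
  next
    case False then show ?thesis by (simp add: chi_def hflat_def)
  qed
qed

lemma chi_zero: "1 < \<bar>y\<bar> \<Longrightarrow> chi y = 0"
proof -
  assume "1 < \<bar>y\<bar>"
  then have "1 < y\<^sup>2" by (metis abs_ge_zero abs_of_nonneg one_less_power power2_abs zero_less_numeral numeral_One less_irrefl zero_neq_numeral one_power2 power_strict_mono)
  then show "chi y = 0" by (simp add: chi_def hflat_zero)
qed

lemma chi_deriv: "\<exists>c'. (\<forall>x. (chi has_real_derivative c' x) (at x)) \<and> (\<forall>x. isCont c' x) \<and> (\<exists>K\<ge>0. \<forall>x. \<bar>c' x\<bar> \<le> K)"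
proof -
  obtain c' where d: "\<And>x. (chi has_real_derivative c' x) (at x)" and s: "smooth c'"
    using smooth_D[OF smooth_chi] by blast
  have c: "\<And>x. isCont c' x" using smooth_cont[OF s] .
  have z: "\<And>x. 1 < \<bar>x\<bar> \<Longrightarrow> c' x = 0" using deriv_zero_outside[OF d chi_zero] by blast
  show ?thesis using d c bounded_cont_supp[OF c z] by blast
qed

lemma weak_deriv_extend:
  assumes pF: "p_rel F G"
    and s\<psi>: "smooth \<psi>" and d\<psi>: "\<And>x. (\<psi> has_real_derivative \<psi>' x) (at x)"
    and L\<psi>: "(\<lambda>x. complex_of_real (\<psi> x)) \<in> L2" and L\<psi>': "(\<lambda>x. complex_of_real (\<psi>' x)) \<in> L2"
  shows "(LINT x|lborel. G x * complex_of_real (\<psi> x)) = \<i> * (LINT x|lborel. F x * complex_of_real (\<psi>' x))"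
proof -
  obtain c' K where dc: "\<And>x. (chi has_real_derivative c' x) (at x)" and cc': "\<And>x. isCont c' x"
    and K: "K \<ge> 0" "\<And>x. \<bar>c' x\<bar> \<le> K"
    using chi_deriv by blast
  have FL: "F \<in> L2" and GL: "G \<in> L2" using pF unfolding p_rel_def by auto
  have [measurable]: "F \<in> borel_measurable borel" "G \<in> borel_measurable borel" using FL GL by (auto intro: L2_meas)
  have s\<psi>': "smooth \<psi>'" using smooth_deriv_eq[OF s\<psi> d\<psi>] .
  have c\<psi>: "\<And>x. isCont \<psi> x" and c\<psi>': "\<And>x. isCont \<psi>' x" using smooth_cont s\<psi> s\<psi>' by auto
  have cchi: "\<And>x. isCont chi x" using smooth_cont[OF smooth_chi] .
  have [measurable]: "\<psi> \<in> borel_measurable borel" "\<psi>' \<in> borel_measurable borel" "chi \<in> borel_measurable borel"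
     "c' \<in> borel_measurable borel"
    using cont_meas c\<psi> c\<psi>' cchi cc' by auto
  define R where "R n = real (Suc n)" for n
  have R: "R n \<ge> 1" for n by (simp add: R_def)
  define \<phi> where "\<phi> n x = \<psi> x * chi (x / R n)" for n x
  define d\<phi> where "d\<phi> n x = \<psi>' x * chi (x / R n) + \<psi> x * (c' (x / R n) / R n)" for n x
  have D: "(\<phi> n has_real_derivative d\<phi> n x) (at x)" for n x
  proof -
    have "((\<lambda>x. x / R n) has_real_derivative 1 / R n) (at x)"
      using R[of n] by (auto intro!: derivative_eq_intros)
    from DERIV_mult[OF d\<psi> DERIV_chain2[OF dc this]]
    show ?thesis unfolding \<phi>_def d\<phi>_def by (simp add: algebra_simps)
  qed
  have test: "test_fun (\<phi> n)" for n
  proof (rule smooth_test_fun)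
    have "smooth (\<lambda>x. chi ((1 / R n) * x))"
      by (intro smooth_comp[OF smooth_chi] smooth_cmult smooth_id)
    then have "smooth (\<lambda>x. chi (x / R n))" by (simp add: divide_inverse mult.commute)
    then show "smooth (\<phi> n)" unfolding \<phi>_def by (rule smooth_mult[OF s\<psi>])
    have "{x. \<phi> n x \<noteq> 0} \<subseteq> {-R n..R n}"
    proof
      fix x assume "x \<in> {x. \<phi> n x \<noteq> 0}"
      then have "chi (x / R n) \<noteq> 0" by (auto simp: \<phi>_def)
      then have "\<bar>x / R n\<bar> \<le> 1" using chi_zero by force
      then show "x \<in> {-R n..R n}" using R[of n] by (auto simp: abs_le_iff field_simps)
    qed
    then show "bounded {x. \<phi> n x \<noteq> 0}" by (rule bounded_subset[OF bounded_closed_interval])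
  qed
  have deq: "deriv (\<phi> n) x = d\<phi> n x" for n x using D DERIV_imp_deriv by blast
  have eq: "(LINT x|lborel. F x * complex_of_real (d\<phi> n x)) = - (LINT x|lborel. \<i> * G x * complex_of_real (\<phi> n x))" for n
  proof -
    have "(LINT x|lborel. F x * complex_of_real (deriv (\<phi> n) x)) = - (LINT x|lborel. \<i> * G x * complex_of_real (\<phi> n x))"
      using pF test[of n] unfolding p_rel_def by (elim conjE allE impE) 
    then show ?thesis by (simp add: deq)
  qed
  have lim0: "(\<lambda>n. y / R n) \<longlonglongrightarrow> 0" for y
    using tendsto_mult[OF tendsto_const[of y] LIMSEQ_inverse_real_of_nat] by (simp add: R_def divide_inverse)
  have limchi: "(\<lambda>n. chi (y / R n)) \<longlonglongrightarrow> 1" for y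
    using isCont_tendsto_compose[OF cchi lim0[of y]] by (simp add: chi_0)
  have limc': "(\<lambda>n. c' (y / R n) / R n) \<longlonglongrightarrow> 0" for y
    using tendsto_mult[OF isCont_tendsto_compose[OF cc' lim0[of y]] LIMSEQ_inverse_real_of_nat]
    by (simp add: R_def divide_inverse)
  define B1 where "B1 x = \<bar>\<psi>' x\<bar> + K * \<bar>\<psi> x\<bar>" for x
  have LB1: "(\<lambda>x. complex_of_real (B1 x)) \<in> L2"
  proof -
    have a: "(\<lambda>x. complex_of_real \<bar>\<psi>' x\<bar>) \<in> L2" by (rule L2_bound[OF L\<psi>']) auto
    have b: "(\<lambda>x. complex_of_real \<bar>\<psi> x\<bar>) \<in> L2" by (rule L2_bound[OF L\<psi>]) auto
    show ?thesis using L2_add[OF a L2_cmult[OF b, of "complex_of_real K"]] by (simp add: B1_def)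
  qed
  have LB2: "(\<lambda>x. complex_of_real \<bar>\<psi> x\<bar>) \<in> L2" by (rule L2_bound[OF L\<psi>]) auto
  have l1: "(\<lambda>n. LINT x|lborel. F x * complex_of_real (d\<phi> n x)) \<longlonglongrightarrow> (LINT x|lborel. F x * complex_of_real (\<psi>' x))"
  proof (rule integral_dominated_convergence[where w="\<lambda>x. norm (F x * complex_of_real (B1 x))"])
    show "(\<lambda>x. F x * complex_of_real (\<psi>' x)) \<in> borel_measurable lborel" by measurable
    show "(\<lambda>x. F x * complex_of_real (d\<phi> n x)) \<in> borel_measurable lborel" for n
      unfolding d\<phi>_def by measurable
    show "integrable lborel (\<lambda>x. norm (F x * complex_of_real (B1 x)))"
      using integrable_L2_mult[OF FL LB1] by (rule integrable_norm)
    show "AE x in lborel. (\<lambda>n. F x * complex_of_real (d\<phi> n x)) \<longlonglongrightarrow> F x * complex_of_real (\<psi>' x)"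
    proof (intro AE_I2)
      fix x
      have "(\<lambda>n. d\<phi> n x) \<longlonglongrightarrow> \<psi>' x * 1 + \<psi> x * 0"
        unfolding d\<phi>_def by (intro tendsto_intros limchi limc')
      then show "(\<lambda>n. F x * complex_of_real (d\<phi> n x)) \<longlonglongrightarrow> F x * complex_of_real (\<psi>' x)"
        by (auto intro!: tendsto_intros)
    qed
    show "AE x in lborel. norm (F x * complex_of_real (d\<phi> n x)) \<le> norm (F x * complex_of_real (B1 x))" for n
    proof (intro AE_I2)
      fix x
      have "\<bar>d\<phi> n x\<bar> \<le> \<bar>\<psi>' x * chi (x / R n)\<bar> + \<bar>\<psi> x * (c' (x / R n) / R n)\<bar>"
        unfolding d\<phi>_def by (rule abs_triangle_ineq)
      also have "\<dots> = \<bar>\<psi>' x\<bar> * \<bar>chi (x / R n)\<bar> + \<bar>\<psi> x\<bar> * (\<bar>c' (x / R n)\<bar> / R n)"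
        using R[of n] by (simp add: abs_mult)
      also have "\<dots> \<le> \<bar>\<psi>' x\<bar> * 1 + \<bar>\<psi> x\<bar> * K"
      proof (intro add_mono mult_left_mono)
        show "\<bar>chi (x / R n)\<bar> \<le> 1" using chi_bounds[of "x / R n"] by simp
        have "\<bar>c' (x / R n)\<bar> / R n \<le> \<bar>c' (x / R n)\<bar>" using R[of n] by (simp add: divide_le_eq mult_le_cancel_left1)
        then show "\<bar>c' (x / R n)\<bar> / R n \<le> K" using K(2)[of "x / R n"] by linarith
      qed auto
      finally have "\<bar>d\<phi> n x\<bar> \<le> B1 x" by (simp add: B1_def mult.commute)
      then show "norm (F x * complex_of_real (d\<phi> n x)) \<le> norm (F x * complex_of_real (B1 x))"
        by (simp add: norm_mult mult_left_mono)
    qed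
  qed
  have l2: "(\<lambda>n. LINT x|lborel. \<i> * G x * complex_of_real (\<phi> n x)) \<longlonglongrightarrow> (LINT x|lborel. \<i> * G x * complex_of_real (\<psi> x))"
  proof (rule integral_dominated_convergence[where w="\<lambda>x. norm (G x * complex_of_real \<bar>\<psi> x\<bar>)"])
    show "(\<lambda>x. \<i> * G x * complex_of_real (\<psi> x)) \<in> borel_measurable lborel" by measurable
    show "(\<lambda>x. \<i> * G x * complex_of_real (\<phi> n x)) \<in> borel_measurable lborel" for n
      unfolding \<phi>_def by measurable
    show "integrable lborel (\<lambda>x. norm (G x * complex_of_real \<bar>\<psi> x\<bar>))"
      using integrable_L2_mult[OF GL LB2] by (rule integrable_norm)
    show "AE x in lborel. (\<lambda>n. \<i> * G x * complex_of_real (\<phi> n x)) \<longlonglongrightarrow> \<i> * G x * complex_of_real (\<psi> x)"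
    proof (intro AE_I2)
      fix x
      have "(\<lambda>n. \<phi> n x) \<longlonglongrightarrow> \<psi> x * 1"
        unfolding \<phi>_def by (intro tendsto_intros limchi)
      then show "(\<lambda>n. \<i> * G x * complex_of_real (\<phi> n x)) \<longlonglongrightarrow> \<i> * G x * complex_of_real (\<psi> x)"
        by (auto intro!: tendsto_intros)
    qed
    show "AE x in lborel. norm (\<i> * G x * complex_of_real (\<phi> n x)) \<le> norm (G x * complex_of_real \<bar>\<psi> x\<bar>)" for n
    proof (intro AE_I2)
      fix x
      have "\<bar>\<phi> n x\<bar> \<le> \<bar>\<psi> x\<bar>" unfolding \<phi>_def using chi_bounds[of "x / R n"]
        by (simp add: abs_mult mult_left_le)
      then show "norm (\<i> * G x * complex_of_real (\<phi> n x)) \<le> norm (G x * complex_of_real \<bar>\<psi> x\<bar>)"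
        by (simp add: norm_mult mult_left_mono)
    qed
  qed
  have l2': "(\<lambda>n. LINT x|lborel. F x * complex_of_real (d\<phi> n x)) \<longlonglongrightarrow> - (LINT x|lborel. \<i> * G x * complex_of_real (\<psi> x))"
    unfolding eq by (intro tendsto_minus l2)
  have E: "(LINT x|lborel. F x * complex_of_real (\<psi>' x)) = - (LINT x|lborel. \<i> * G x * complex_of_real (\<psi> x))"
    using LIMSEQ_unique[OF l1 l2'] .
  have "(LINT x|lborel. \<i> * G x * complex_of_real (\<psi> x)) = \<i> * (LINT x|lborel. G x * complex_of_real (\<psi> x))"
    by (simp add: mult.assoc)
  with E show ?thesis by simp
qed

lemma t_rel_smooth_away:
  assumes su: "smooth u" and du: "\<And>x. (u has_real_derivative u' x) (at x)"
    and d: "\<delta> > 0" and z1: "\<And>x. \<bar>x\<bar> < \<delta> \<Longrightarrow> u x = 0" and z2: "\<And>x. M < \<bar>x\<bar> \<Longrightarrow> u x = 0"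
  shows "\<exists>k. t_rel (\<lambda>x. complex_of_real (u x)) k"
proof -
  have pr: "p_rel (\<lambda>x. complex_of_real (u x)) (\<lambda>x. - \<i> * complex_of_real (u' x))"
    by (rule p_rel_smooth_cs[OF su du z2])
  have su': "smooth u'" using smooth_deriv_eq[OF su du] .
  have cu': "\<And>x. isCont u' x" using smooth_cont[OF su'] .
  have z1': "u' x = 0" if "\<bar>x\<bar> < \<delta>" for x
  proof (rule deriv_zero_on_open[OF du])
    show "open {y::real. \<bar>y\<bar> < \<delta>}" by (intro open_Collect_less continuous_intros)
  qed (use that z1 in auto)
  have z2': "u' x = 0" if "M < \<bar>x\<bar>" for x by (rule deriv_zero_outside[OF du z2 that])
  have cc: "ccs (\<lambda>x. u' x / x)"
    unfolding ccs_def
  proof (intro conjI allI)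
    fix x :: real
    show "isCont (\<lambda>x. u' x / x) x"
    proof (cases "x = 0")
      case True
      have o: "open {y::real. \<bar>y\<bar> < \<delta>}" by (intro open_Collect_less continuous_intros)
      have "eventually (\<lambda>y. y \<in> {y::real. \<bar>y\<bar> < \<delta>}) (nhds x)"
        using d True by (intro eventually_nhds_in_open[OF o]) auto
      then have "eventually (\<lambda>y. u' y / y = 0) (nhds x)"
        by (rule eventually_mono) (auto intro: z1')
      then show ?thesis using isCont_cong[of "\<lambda>y. u' y / y" "\<lambda>y. 0" x] by simp
    next
      case False then show ?thesis using cu'[of x] by (auto intro!: continuous_intros)
    qed
  next
    show "\<exists>M. \<forall>x. M < \<bar>x\<bar> \<longrightarrow> u' x / x = 0" using z2' by auto
  qed
  have eqf: "(\<lambda>x. - \<i> * complex_of_real (u' x) / complex_of_real x) = (\<lambda>x. - \<i> * complex_of_real (u' x / x))"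
    by auto
  have L: "(\<lambda>x. - \<i> * complex_of_real (u' x) / complex_of_real x) \<in> L2"
    unfolding eqf by (rule L2_cmult[OF ccs_L2[OF cc]])
  show ?thesis unfolding t_rel_def using pr L by blast
qed

lemma hflat_lim: "(hflat \<longlongrightarrow> 1) at_top"
proof -
  have "((\<lambda>t::real. exp (- inverse t)) \<longlongrightarrow> exp (- 0)) at_top"
    by (intro tendsto_exp tendsto_minus tendsto_inverse_0_at_top filterlim_ident)
  then have "((\<lambda>t::real. exp (- inverse t)) \<longlongrightarrow> 1) at_top" by simp
  then show ?thesis
    by (rule Lim_transform_eventually)
       (auto simp: hflat_def eventually_at_top_linorder divide_inverse intro!: exI[of _ 1])
qed

lemma seq_at_top: "c > 0 \<Longrightarrow> filterlim (\<lambda>n. real (Suc n) * c - 1) at_top sequentially"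
proof -
  assume c: "c > 0"
  have "filterlim (\<lambda>n. real (Suc n)) at_top sequentially"
    using filterlim_compose[OF filterlim_real_sequentially filterlim_Suc] by (simp add: o_def)
  then have "filterlim (\<lambda>n. c * real (Suc n)) at_top sequentially"
    by (rule filterlim_tendsto_pos_mult_at_top[OF tendsto_const c])
  then have "filterlim (\<lambda>n. -1 + c * real (Suc n)) at_top sequentially"
    by (rule filterlim_tendsto_add_at_top[OF tendsto_const])
  then show ?thesis by (simp add: mult.commute)
qed

lemma interval_ortho:
  assumes w: "w \<in> L2" and orth: "\<And>F k. t_rel F k \<Longrightarrow> inner_L2 w F = 0"
    and ab: "a < b" "0 \<le> a \<or> b \<le> 0"
  shows "(LINT x|lborel. cnj (w x) * indicator {a<..<b} x) = 0"
proof -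
  have [measurable]: "w \<in> borel_measurable borel" using w by (rule L2_meas)
  define R where "R n = real (Suc n)" for n
  have R: "R n \<ge> 1" for n by (simp add: R_def)
  define \<phi> where "\<phi> n x = hflat (R n * (x - a) - 1) * hflat (R n * (b - x) - 1)" for n x
  have sm: "smooth (\<phi> n)" for n
    unfolding \<phi>_def
    by (intro smooth_mult smooth_comp[OF smooth_hflat] smooth_diff smooth_const smooth_cmult smooth_id)
  have supp: "a + 1 / R n < x \<and> x < b - 1 / R n" if "\<phi> n x \<noteq> 0" for n x
  proof -
    have "hflat (R n * (x - a) - 1) \<noteq> 0" "hflat (R n * (b - x) - 1) \<noteq> 0"
      using that unfolding \<phi>_def by auto
    then have "R n * (x - a) - 1 > 0" "R n * (b - x) - 1 > 0"
      using hflat_zero by (meson not_le)+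
    then show ?thesis using R[of n] by (auto simp: field_simps)
  qed
  have phi_bd: "0 \<le> \<phi> n x" "\<phi> n x \<le> 1" for n x
    unfolding \<phi>_def using hflat_nonneg hflat_le1 by (auto intro: mult_le_one)
  have trel: "\<exists>k. t_rel (\<lambda>x. complex_of_real (\<phi> n x)) k" for n
  proof -
    obtain u' where du: "\<And>x. (\<phi> n has_real_derivative u' x) (at x)" using smooth_D[OF sm[of n]] by blast
    show ?thesis
    proof (rule t_rel_smooth_away[OF sm du])
      show "1 / R n > 0" using R[of n] by simp
      show "\<phi> n x = 0" if "\<bar>x\<bar> < 1 / R n" for x
        using supp[of n x] that ab(2) by (cases "\<phi> n x = 0") (auto simp: abs_less_iff)
      show "\<phi> n x = 0" if "\<bar>a\<bar> + \<bar>b\<bar> < \<bar>x\<bar>" for x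
      proof (rule ccontr)
        assume "\<phi> n x \<noteq> 0"
        then have "a + 1 / R n < x \<and> x < b - 1 / R n" by (rule supp)
        moreover have "1 / R n > 0" using R[of n] by simp
        ultimately have "a < x" "x < b" by linarith+
        then show False using that by (smt (verit))
      qed
    qed
  qed
  have zero: "(LINT x|lborel. cnj (w x) * complex_of_real (\<phi> n x)) = 0" for n
    using orth trel[of n] unfolding inner_L2_def by blast
  have lim: "(\<lambda>n. LINT x|lborel. cnj (w x) * complex_of_real (\<phi> n x)) \<longlonglongrightarrow> (LINT x|lborel. cnj (w x) * indicator {a<..<b} x)"
  proof (rule integral_dominated_convergence[where w="\<lambda>x. norm (cnj (w x) * complex_of_real (indicator {a..b} x))"])
    show "(\<lambda>x. cnj (w x) * indicator {a<..<b} x) \<in> borel_measurable lborel" by measurable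
    show "(\<lambda>x. cnj (w x) * complex_of_real (\<phi> n x)) \<in> borel_measurable lborel" for n
    proof -
      have "\<phi> n \<in> borel_measurable borel" using cont_meas smooth_cont[OF sm[of n]] by blast
      then show ?thesis by measurable
    qed
    have Li: "(\<lambda>x. complex_of_real (indicator {a..b} x)) \<in> L2"
    proof (rule L2I)
      show "(\<lambda>x. complex_of_real (indicator {a..b} x)) \<in> borel_measurable lborel" by measurable
      have "integrable lborel (\<lambda>x. 1 * indicat_real {a..b} x)"
        by (intro borel_integrable_atLeastAtMost) auto
      moreover have "(cmod (complex_of_real (indicator {a..b} x)))\<^sup>2 = 1 * indicat_real {a..b} x" for x
        by (simp add: indicator_def)
      ultimately show "integrable lborel (\<lambda>x. (cmod (complex_of_real (indicator {a..b} x)))\<^sup>2)"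
        by presburger
    qed
    show "integrable lborel (\<lambda>x. norm (cnj (w x) * complex_of_real (indicator {a..b} x)))"
      by (intro integrable_norm integrable_L2_mult L2_cnj w Li)
    show "AE x in lborel. (\<lambda>n. cnj (w x) * complex_of_real (\<phi> n x)) \<longlonglongrightarrow> cnj (w x) * indicator {a<..<b} x"
    proof (intro AE_I2)
      fix x
      show "(\<lambda>n. cnj (w x) * complex_of_real (\<phi> n x)) \<longlonglongrightarrow> cnj (w x) * indicator {a<..<b} x"
      proof (cases "a < x \<and> x < b")
        case True
        have l1: "(\<lambda>n. hflat (R n * (x - a) - 1)) \<longlonglongrightarrow> 1"
          using filterlim_compose[OF hflat_lim seq_at_top[of "x - a"]] True by (simp add: R_def)
        have l2: "(\<lambda>n. hflat (R n * (b - x) - 1)) \<longlonglongrightarrow> 1"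
          using filterlim_compose[OF hflat_lim seq_at_top[of "b - x"]] True by (simp add: R_def)
        have "(\<lambda>n. \<phi> n x) \<longlonglongrightarrow> 1 * 1" unfolding \<phi>_def by (intro tendsto_mult l1 l2)
        then have "(\<lambda>n. cnj (w x) * complex_of_real (\<phi> n x)) \<longlonglongrightarrow> cnj (w x) * complex_of_real (1 * 1)"
          by (intro tendsto_mult tendsto_const tendsto_of_real)
        then show ?thesis using True by simp
      next
        case False
        then have "\<phi> n x = 0" for n
          using supp[of n x] R[of n] by (smt (verit) divide_pos_pos)
        then show ?thesis using False by simp
      qed
    qed
    show "AE x in lborel. norm (cnj (w x) * complex_of_real (\<phi> n x)) \<le> norm (cnj (w x) * complex_of_real (indicator {a..b} x))" for n
    proof (intro AE_I2)
      fix x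
      have "\<bar>\<phi> n x\<bar> \<le> indicator {a..b} x"
      proof (cases "\<phi> n x = 0")
        case False
        then have "x \<in> {a..b}" using supp[of n x] R[of n] by (smt (verit) atLeastAtMost_iff divide_pos_pos)
        then show ?thesis using phi_bd[of n x] by simp
      qed simp
      then show "norm (cnj (w x) * complex_of_real (\<phi> n x)) \<le> norm (cnj (w x) * complex_of_real (indicator {a..b} x))"
        by (simp add: norm_mult mult_left_mono)
    qed
  qed
  then have "(\<lambda>n. 0) \<longlonglongrightarrow> (LINT x|lborel. cnj (w x) * indicator {a<..<b} x)" using zero by simp
  then show ?thesis using LIMSEQ_unique[OF _ tendsto_const] by metis
qed

lemma ray_zero_real:
  fixes v :: "real \<Rightarrow> real"
  assumes int: "integrable lborel v" and z: "\<And>x. (LINT y|lborel. v y * indicator {x<..} y) = 0"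
  shows "AE y in lborel. v y = 0"
proof -
  have [measurable]: "v \<in> borel_measurable borel" using int by auto
  define P where "P y = max (v y) 0" for y
  define Q where "Q y = max (- v y) 0" for y
  have [measurable]: "P \<in> borel_measurable borel" "Q \<in> borel_measurable borel"
    unfolding P_def Q_def by measurable
  have iP: "integrable lborel P" unfolding P_def by (intro integrable_max int) auto
  have iQ: "integrable lborel Q" unfolding Q_def by (intro integrable_max) (use int in auto)
  have iI: "integrable lborel (\<lambda>y. g y * indicator {x<..} y)" if "integrable lborel g" for g :: "real \<Rightarrow> real" and x
    by (rule Bochner_Integration.integrable_bound[OF that]) (use that in \<open>auto simp: indicator_def\<close>)
  have em: "emeasure (density lborel (\<lambda>y. ennreal (g y))) {x<..} = ennreal (LINT y|lborel. g y * indicator {x<..} y)"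
    if "integrable lborel g" "\<And>y. g y \<ge> 0" for g :: "real \<Rightarrow> real" and x
  proof -
    have [measurable]: "g \<in> borel_measurable borel" using that(1) by auto
    have "emeasure (density lborel (\<lambda>y. ennreal (g y))) {x<..} = (\<integral>\<^sup>+ y. ennreal (g y) * indicator {x<..} y \<partial>lborel)"
      by (subst emeasure_density) auto
    also have "\<dots> = (\<integral>\<^sup>+ y. ennreal (g y * indicator {x<..} y) \<partial>lborel)"
      by (intro nn_integral_cong) (auto simp: indicator_def)
    also have "\<dots> = ennreal (LINT y|lborel. g y * indicator {x<..} y)"
      by (rule nn_integral_eq_integral[OF iI[OF that(1)]]) (use that(2) in auto)
    finally show ?thesis .
  qed
  have PQ: "(LINT y|lborel. P y * indicator {x<..} y) = (LINT y|lborel. Q y * indicator {x<..} y)" for x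
  proof -
    have "(LINT y|lborel. P y * indicator {x<..} y) - (LINT y|lborel. Q y * indicator {x<..} y)
        = (LINT y|lborel. P y * indicator {x<..} y - Q y * indicator {x<..} y)"
      using iI[OF iP] iI[OF iQ] by simp
    also have "\<dots> = (LINT y|lborel. v y * indicator {x<..} y)"
      by (intro Bochner_Integration.integral_cong) (auto simp: P_def Q_def indicator_def)
    finally show ?thesis using z[of x] by simp
  qed
  have "density lborel (\<lambda>y. ennreal (P y)) = density lborel (\<lambda>y. ennreal (Q y))"
  proof (rule measure_eqI_lessThan)
    show "emeasure (density lborel (\<lambda>y. ennreal (P y))) {x<..} < \<infinity>" for x
      using em[OF iP, of x] by (simp add: P_def)
    show "emeasure (density lborel (\<lambda>y. ennreal (P y))) {x<..} = emeasure (density lborel (\<lambda>y. ennreal (Q y))) {x<..}" for x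
      using em[OF iP, of x] em[OF iQ, of x] PQ[of x] by (simp add: P_def Q_def)
  qed auto
  then have "AE y in lborel. ennreal (P y) = ennreal (Q y)"
    by (intro sigma_finite_measure.density_unique[OF lborel.sigma_finite_measure_axioms]) auto
  then show ?thesis
    by (rule AE_mp) (auto intro!: AE_I2 simp: P_def Q_def max_def split: if_splits)
qed

lemma ray_zero:
  fixes v :: "real \<Rightarrow> complex"
  assumes int: "integrable lborel v" and z: "\<And>x. (LINT y|lborel. v y * indicator {x<..} y) = 0"
  shows "AE y in lborel. v y = 0"
proof -
  have iI: "integrable lborel (\<lambda>y. v y * indicator {x<..} y)" for x
    by (rule Bochner_Integration.integrable_bound[OF int]) (use int in \<open>auto simp: indicator_def\<close>)
  have "AE y in lborel. Re (v y) = 0"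
  proof (rule ray_zero_real)
    show "integrable lborel (\<lambda>y. Re (v y))" using int by auto
    fix x
    have "(LINT y|lborel. Re (v y) * indicator {x<..} y) = (LINT y|lborel. Re (v y * indicator {x<..} y))"
      by (intro Bochner_Integration.integral_cong) (auto simp: indicator_def)
    also have "\<dots> = Re (LINT y|lborel. v y * indicator {x<..} y)" by (rule integral_Re[OF iI[of x]])
    finally show "(LINT y|lborel. Re (v y) * indicator {x<..} y) = 0" using z[of x] by simp
  qed
  moreover have "AE y in lborel. Im (v y) = 0"
  proof (rule ray_zero_real)
    show "integrable lborel (\<lambda>y. Im (v y))" using int by auto
    fix x
    have "(LINT y|lborel. Im (v y) * indicator {x<..} y) = (LINT y|lborel. Im (v y * indicator {x<..} y))"
      by (intro Bochner_Integration.integral_cong) (auto simp: indicator_def)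
    also have "\<dots> = Im (LINT y|lborel. v y * indicator {x<..} y)" by (rule integral_Im[OF iI[of x]])
    finally show "(LINT y|lborel. Im (v y) * indicator {x<..} y) = 0" using z[of x] by simp
  qed
  ultimately show ?thesis by eventually_elim (auto simp: complex_eq_iff)
qed

lemma L2_indicator_Ioo: "(\<lambda>x. indicator {a<..<b} x :: complex) \<in> L2"
proof (rule L2I)
  show "(\<lambda>x. indicator {a<..<b} x :: complex) \<in> borel_measurable lborel" by measurable
  have "emeasure lborel {a<..<b} < \<infinity>"
  proof (cases "a \<le> b")
    case True then show ?thesis by (simp add: emeasure_lborel_Ioo)
  next
    case False then have "{a<..<b} = {}" by auto
    then show ?thesis by simp
  qed
  then have "integrable lborel (indicat_real {a<..<b})"
    by (intro integrable_real_indicator) auto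
  moreover have "(cmod (indicator {a<..<b} x :: complex))\<^sup>2 = indicat_real {a<..<b} x" for x
    by (simp add: indicator_def)
  ultimately show "integrable lborel (\<lambda>x. (cmod (indicator {a<..<b} x :: complex))\<^sup>2)" by simp
qed

lemma ortho_zero:
  assumes w: "w \<in> L2" and orth: "\<And>F k. t_rel F k \<Longrightarrow> inner_L2 w F = 0"
  shows "AE x in lborel. w x = 0"
proof -
  have pos: "AE y in lborel. cnj (w y) * indicator {0<..<real (Suc N)} y = 0" for N
  proof (rule ray_zero)
    show "integrable lborel (\<lambda>y. cnj (w y) * indicator {0<..<real (Suc N)} y)"
      by (intro integrable_L2_inner w L2_indicator_Ioo)
    fix x
    have "(LINT y|lborel. cnj (w y) * indicator {0<..<real (Suc N)} y * indicator {x<..} y)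
        = (LINT y|lborel. cnj (w y) * indicator {max x 0<..<real (Suc N)} y)"
      by (intro Bochner_Integration.integral_cong) (auto simp: indicator_def)
    also have "\<dots> = 0"
    proof (cases "max x 0 < real (Suc N)")
      case True then show ?thesis by (intro interval_ortho[OF w orth]) auto
    next
      case False then have "{max x 0<..<real (Suc N)} = {}" by auto
      then show ?thesis by simp
    qed
    finally show "(LINT y|lborel. cnj (w y) * indicator {0<..<real (Suc N)} y * indicator {x<..} y) = 0" .
  qed
  have neg: "AE y in lborel. cnj (w y) * indicator {- real (Suc N)<..<0} y = 0" for N
  proof (rule ray_zero)
    show "integrable lborel (\<lambda>y. cnj (w y) * indicator {- real (Suc N)<..<0} y)"
      by (intro integrable_L2_inner w L2_indicator_Ioo)
    fix x
    have "(LINT y|lborel. cnj (w y) * indicator {- real (Suc N)<..<0} y * indicator {x<..} y)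
        = (LINT y|lborel. cnj (w y) * indicator {max x (- real (Suc N))<..<0} y)"
      by (intro Bochner_Integration.integral_cong) (auto simp: indicator_def)
    also have "\<dots> = 0"
    proof (cases "max x (- real (Suc N)) < 0")
      case True then show ?thesis by (intro interval_ortho[OF w orth]) auto
    next
      case False then have "{max x (- real (Suc N))<..<0} = {}" by auto
      then show ?thesis by simp
    qed
    finally show "(LINT y|lborel. cnj (w y) * indicator {- real (Suc N)<..<0} y * indicator {x<..} y) = 0" .
  qed
  have A1: "AE y in lborel. \<forall>N. cnj (w y) * indicator {0<..<real (Suc N)} y = 0"
    by (rule AE_all_countable[THEN iffD2]) (rule allI, rule pos)
  have A2: "AE y in lborel. \<forall>N. cnj (w y) * indicator {- real (Suc N)<..<0} y = 0"
    by (rule AE_all_countable[THEN iffD2]) (rule allI, rule neg)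
  have "AE y in lborel. (\<forall>N. cnj (w y) * indicator {0<..<real (Suc N)} y = 0) \<and>
      (\<forall>N. cnj (w y) * indicator {- real (Suc N)<..<0} y = 0) \<and> y \<noteq> 0"
    using A1 A2 AE_lborel_singleton[of 0] by eventually_elim blast
  then show ?thesis
  proof (rule AE_mp, intro AE_I2 impI)
    fix y assume H: "(\<forall>N. cnj (w y) * indicator {0<..<real (Suc N)} y = 0) \<and>
      (\<forall>N. cnj (w y) * indicator {- real (Suc N)<..<0} y = 0) \<and> y \<noteq> 0"
    obtain N where N: "\<bar>y\<bar> < real N" using reals_Archimedean2 by blast
    show "w y = 0"
    proof (cases "y > 0")
      case True
      then have "y \<in> {0<..<real (Suc N)}" using N by auto
      then show ?thesis using H by (auto simp: indicator_def)
    next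
      case False
      then have "y \<in> {- real (Suc N)<..<0}" using N H by auto
      then show ?thesis using H by (auto simp: indicator_def)
    qed
  qed
qed

lemma t_rel_L2: "t_rel F k \<Longrightarrow> F \<in> L2 \<and> k \<in> L2"
  unfolding t_rel_def p_rel_def by auto

lemma tstar_unique:
  assumes "tstar_rel y z1" "tstar_rel y' z2" "AE x in lborel. y x = y' x"
  shows "AE x in lborel. z1 x = z2 x"
proof -
  have L: "y \<in> L2" "y' \<in> L2" "z1 \<in> L2" "z2 \<in> L2" using assms unfolding tstar_rel_def by auto
  have "AE x in lborel. z1 x - z2 x = 0"
  proof (rule ortho_zero)
    show "(\<lambda>x. z1 x - z2 x) \<in> L2" using L by (intro L2_diff)
    fix F k assume t: "t_rel F k"
    have FL: "F \<in> L2" and kL: "k \<in> L2" using t_rel_L2[OF t] by auto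
    have "inner_L2 (\<lambda>x. z1 x - z2 x) F = (LINT x|lborel. cnj (z1 x) * F x - cnj (z2 x) * F x)"
      unfolding inner_L2_def by (simp add: algebra_simps)
    also have "\<dots> = inner_L2 z1 F - inner_L2 z2 F"
      unfolding inner_L2_def using integrable_L2_inner[OF L(3) FL] integrable_L2_inner[OF L(4) FL] by simp
    also have "inner_L2 z1 F = inner_L2 y k" using assms(1) t unfolding tstar_rel_def by auto
    also have "inner_L2 z2 F = inner_L2 y' k" using assms(2) t unfolding tstar_rel_def by auto
    also have "inner_L2 y' k = inner_L2 y k"
    proof (rule inner_L2_cong_AE[OF L(2) L(1) kL kL])
      show "AE x in lborel. y' x = y x" using assms(3) by (simp add: eq_commute)
    qed simp
    finally show "inner_L2 (\<lambda>x. z1 x - z2 x) F = 0" by simp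
  qed
  then show ?thesis by auto
qed

lemma tstar_pow_L2: "tstar_pow n f g \<Longrightarrow> f \<in> L2 \<and> g \<in> L2"
proof (induction n arbitrary: g)
  case 0 then show ?case by simp
next
  case (Suc n) then show ?case by (auto simp: tstar_rel_def)
qed

lemma tstar_pow_unique:
  "tstar_pow n f g1 \<Longrightarrow> tstar_pow n f' g2 \<Longrightarrow> AE x in lborel. f x = f' x \<Longrightarrow> AE x in lborel. g1 x = g2 x"
proof (induction n arbitrary: g1 g2)
  case 0 then show ?case by (auto elim: AE_mp)
next
  case (Suc n)
  then obtain h1 h2 where "tstar_pow n f h1" "tstar_rel h1 g1" "tstar_pow n f' h2" "tstar_rel h2 g2" by auto
  with Suc.IH Suc.prems(3) show ?case using tstar_unique by blast
qed

lemma pascal_sum: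
  fixes F :: "nat \<Rightarrow> 'a::comm_ring_1"
  shows "(\<Sum>l\<le>Suc k. of_nat (Suc k choose l) * y^(Suc k - l) * F l)
       = (\<Sum>l\<le>k. of_nat (k choose l) * y^(k - l) * (y * F l + F (Suc l)))"
proof -
  have A: "(\<Sum>l\<le>Suc k. of_nat (Suc k choose l) * y^(Suc k - l) * F l)
      = y^(Suc k) * F 0 + (\<Sum>l\<le>k. of_nat (k choose l) * y^(k - l) * F (Suc l))
          + (\<Sum>l\<le>k. of_nat (k choose Suc l) * y^(k - l) * F (Suc l))"
    by (subst sum.atMost_Suc_shift) (simp add: binomial_Suc_Suc sum.distrib algebra_simps binomial_eq_0)
  have B: "(\<Sum>l\<le>k. of_nat (k choose l) * y^(Suc k - l) * F l)
      = (\<Sum>l\<le>Suc k. of_nat (k choose l) * y^(Suc k - l) * F l)" by (simp add: binomial_eq_0)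
  also have "\<dots> = y^(Suc k) * F 0 + (\<Sum>l\<le>k. of_nat (k choose Suc l) * y^(k - l) * F (Suc l))"
    by (subst sum.atMost_Suc_shift) simp
  finally have B': "y^(Suc k) * F 0 + (\<Sum>l\<le>k. of_nat (k choose Suc l) * y^(k - l) * F (Suc l))
      = (\<Sum>l\<le>k. of_nat (k choose l) * y^(Suc k - l) * F l)" ..
  have C: "(\<Sum>l\<le>k. of_nat (k choose l) * y^(Suc k - l) * F l) = (\<Sum>l\<le>k. of_nat (k choose l) * y^(k - l) * (y * F l))"
    by (intro sum.cong refl) (simp add: Suc_diff_le algebra_simps)
  show ?thesis
    unfolding A using B' C by (simp add: sum.distrib algebra_simps)
qed

definition c0 :: "nat \<Rightarrow> real" where "c0 k = (if odd k then 1 / real k else 0)"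

primrec cser :: "nat \<Rightarrow> nat \<Rightarrow> real" where
  "cser 0 = c0"
| "cser (Suc l) = (\<lambda>k. diffs (cser l) k / real (Suc l))"

definition U :: "nat \<Rightarrow> real \<Rightarrow> real" where "U l b = (\<Sum>k. cser l k * b ^ k)"

lemma cser_closed: "cser l k = real (k + l choose l) * c0 (k + l)"
proof (induction l arbitrary: k)
  case 0 then show ?case by simp
next
  case (Suc l)
  have e: "real (Suc k) * real (Suc k + l choose l) = real (Suc l) * real (k + Suc l choose Suc l)"
  proof -
    have "(Suc k + l choose l) * Suc k = (k + Suc l choose Suc l) * Suc l"
      using Suc_times_binomial_add[of l k] by (simp add: add.commute mult.commute)
    then show ?thesis by (metis mult.commute of_nat_mult)
  qed
  have "cser (Suc l) k = real (Suc k) * (real (Suc k + l choose l) * c0 (Suc k + l)) / real (Suc l)"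
    by (simp add: diffs_def Suc)
  also have "real (Suc k) * (real (Suc k + l choose l) * c0 (Suc k + l)) / real (Suc l)
     = (real (Suc k) * real (Suc k + l choose l)) * c0 (k + Suc l) / real (Suc l)" by (simp add: mult_ac)
  also have "\<dots> = (real (Suc l) * real (k + Suc l choose Suc l)) * c0 (k + Suc l) / real (Suc l)"
    by (simp only: e)
  finally show ?case by simp
qed

lemma summable_c0: "\<bar>b\<bar> < 1 \<Longrightarrow> summable (\<lambda>k. c0 k * b ^ k)"
proof (rule summable_comparison_test)
  assume b: "\<bar>b\<bar> < 1"
  show "summable (\<lambda>k. \<bar>b\<bar> ^ k)" using b by (intro summable_geometric) simp
  show "\<exists>N. \<forall>n\<ge>N. norm (c0 n * b ^ n) \<le> \<bar>b\<bar> ^ n"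
  proof (intro exI allI impI)
    fix n :: nat assume "1 \<le> n"
    then have "\<bar>c0 n\<bar> \<le> 1" by (auto simp: c0_def)
    then show "norm (c0 n * b ^ n) \<le> \<bar>b\<bar> ^ n"
      by (simp add: abs_mult power_abs mult_left_le_one_le)
  qed
qed

lemma summable_cser: "\<bar>b\<bar> < 1 \<Longrightarrow> summable (\<lambda>k. cser l k * b ^ k)"
proof (induction l arbitrary: b)
  case 0 then show ?case by (simp add: summable_c0)
next
  case (Suc l)
  have "summable (\<lambda>k. diffs (cser l) k * b ^ k)"
    by (rule termdiff_converges[where K=1]) (use Suc in auto)
  then have "summable (\<lambda>k. (1 / real (Suc l)) * (diffs (cser l) k * b ^ k))" by (rule summable_mult)
  then show ?case by simp
qed

lemma U_deriv:
  assumes b: "\<bar>b\<bar> < 1"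
  shows "(U l has_real_derivative real (Suc l) * U (Suc l) b) (at b)"
proof -
  define K where "K = (1 + \<bar>b\<bar>) / 2"
  have K: "\<bar>b\<bar> < K" "\<bar>K\<bar> < 1" using b by (auto simp: K_def)
  have "((\<lambda>x. \<Sum>n. cser l n * x ^ n) has_real_derivative (\<Sum>n. diffs (cser l) n * b ^ n)) (at b)"
    by (rule termdiffs_strong[OF summable_cser[OF K(2)]]) (use K in auto)
  moreover have "(\<Sum>n. diffs (cser l) n * b ^ n) = real (Suc l) * U (Suc l) b"
  proof -
    have "U (Suc l) b = (\<Sum>n. (1 / real (Suc l)) * (diffs (cser l) n * b ^ n))" by (simp add: U_def)
    also have "\<dots> = (1 / real (Suc l)) * (\<Sum>n. diffs (cser l) n * b ^ n)"
      by (rule suminf_mult) (rule termdiff_converges[where K=1]; use b summable_cser in auto)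
    finally show ?thesis by simp
  qed
  ultimately show ?thesis by (simp add: U_def[abs_def])
qed

lemma U0_ln:
  assumes b: "\<bar>b\<bar> < 1"
  shows "U 0 b = ln ((1 + b) / (1 - b)) / 2"
proof -
  have s1: "(\<lambda>n. - ((-b)^n) / of_nat n) sums ln (1 + b)" using ln_series'[OF b] .
  have s2: "(\<lambda>n. - ((b)^n) / of_nat n) sums ln (1 + (- b))" using ln_series'[of "-b"] b by simp
  have "(\<lambda>n. - ((-b)^n) / of_nat n - - ((b)^n) / of_nat n) sums (ln (1 + b) - ln (1 + (- b)))"
    by (rule sums_diff[OF s1 s2])
  moreover have "- ((-b)^n) / of_nat n - - ((b)^n) / of_nat n = 2 * (c0 n * b ^ n)" for n
    by (cases "even n") (auto simp: c0_def power_minus_odd)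
  ultimately have "(\<lambda>n. 2 * (c0 n * b ^ n)) sums (ln (1 + b) - ln (1 - b))" by simp
  then have "(\<lambda>n. (1/2) * (2 * (c0 n * b ^ n))) sums ((1/2) * (ln (1 + b) - ln (1 - b)))" by (rule sums_mult)
  then have "(\<lambda>n. c0 n * b ^ n) sums ((ln (1 + b) - ln (1 - b)) / 2)" by simp
  then have "U 0 b = (ln (1 + b) - ln (1 - b)) / 2" by (simp add: U_def sums_iff)
  also have "ln (1 + b) - ln (1 - b) = ln ((1 + b) / (1 - b))" using b by (simp add: ln_divide_pos)
  finally show ?thesis .
qed

lemma series_n:
  assumes b: "\<bar>b\<bar> < 1"
  shows "(\<lambda>n. real (2*n+1 choose l) / real (2*n+1) * b^(2*n+1-l)) sums U l b"
proof -
  define h where "h j = real (j choose l) * c0 j * b ^ (j - l)" for j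
  have "(\<lambda>k. cser l k * b ^ k) sums U l b" using summable_cser[OF b] by (simp add: U_def summable_sums)
  moreover have "cser l k * b ^ k = h (k + l)" for k by (simp add: h_def cser_closed)
  ultimately have "(\<lambda>k. h (k + l)) sums U l b" by simp
  moreover have "(\<Sum>i<l. h i) = 0" by (intro sum.neutral) (auto simp: h_def)
  ultimately have hs: "h sums U l b" by (simp add: sums_iff_shift)
  have sm: "strict_mono (\<lambda>n::nat. 2*n+1)" by (intro strict_monoI) auto
  have "(\<lambda>n. h (2*n+1)) sums U l b"
  proof (subst sums_mono_reindex[OF sm])
    show "h n = 0" if "n \<notin> range (\<lambda>n. 2*n+1)" for n
    proof -
      have "even n" using that by (metis odd_two_times_div_two_succ rangeI)
      then show ?thesis by (simp add: h_def c0_def)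
    qed
  qed (rule hs)
  then show ?thesis by (simp add: h_def c0_def)
qed

definition Phi :: "real \<Rightarrow> nat \<Rightarrow> real \<Rightarrow> real" where
  "Phi \<beta> l b = fact l * (-2 * \<beta>)^l * U l b"

lemma Phi_deriv:
  "\<bar>b\<bar> < 1 \<Longrightarrow> ((\<lambda>b. Phi \<beta> l b) has_real_derivative Phi \<beta> (Suc l) b / (-2 * \<beta>)) (at b)" if "\<beta> \<noteq> 0"
proof -
  assume b: "\<bar>b\<bar> < 1"
  have "((\<lambda>b. Phi \<beta> l b) has_real_derivative fact l * (-2 * \<beta>)^l * (real (Suc l) * U (Suc l) b)) (at b)"
    unfolding Phi_def by (intro DERIV_cmult U_deriv b)
  moreover have "fact l * (-2 * \<beta>)^l * (real (Suc l) * U (Suc l) b) = Phi \<beta> (Suc l) b / (-2 * \<beta>)"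
    using that by (simp add: Phi_def field_simps)
  ultimately show ?thesis by simp
qed

lemma Lambda_closed:
  assumes eps: "\<epsilon> > 0" and b: "\<bar>b\<bar> < 1"
  shows "Lambda \<epsilon> k x b = 2 * (\<Sum>l\<le>k. real (k choose l) * (x\<^sup>2)^(k - l) * Phi (sqrt \<epsilon>) l b)"
  using b
proof (induction k arbitrary: b)
  case 0
  then show ?case by (simp add: Phi_def U0_ln)
next
  case (Suc k)
  define \<beta> where "\<beta> = sqrt \<epsilon>"
  have \<beta>: "\<beta> \<noteq> 0" using eps by (simp add: \<beta>_def)
  define S where "S b = 2 * (\<Sum>l\<le>k. real (k choose l) * (x\<^sup>2)^(k - l) * Phi \<beta> l b)" for b
  have eqS: "Lambda \<epsilon> k x c = S c" if "\<bar>c\<bar> < 1" for c using Suc.IH[OF that] by (simp add: S_def \<beta>_def)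
  have dS: "(S has_real_derivative 2 * (\<Sum>l\<le>k. real (k choose l) * (x\<^sup>2)^(k - l) * (Phi \<beta> (Suc l) b / (-2 * \<beta>)))) (at b)"
    unfolding S_def by (intro DERIV_cmult DERIV_sum Phi_deriv[OF \<beta>] Suc.prems)
  have "((\<lambda>c. Lambda \<epsilon> k x c) has_real_derivative 2 * (\<Sum>l\<le>k. real (k choose l) * (x\<^sup>2)^(k - l) * (Phi \<beta> (Suc l) b / (-2 * \<beta>)))) (at b)"
  proof (rule has_field_derivative_transform_within_open[OF dS, where S="{-1<..<1}"])
    show "b \<in> {-1<..<1}" using Suc.prems by auto
  qed (auto simp: eqS abs_less_iff)
  then have dL: "deriv (\<lambda>c. Lambda \<epsilon> k x c) b = 2 * (\<Sum>l\<le>k. real (k choose l) * (x\<^sup>2)^(k - l) * (Phi \<beta> (Suc l) b / (-2 * \<beta>)))"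
    by (rule DERIV_imp_deriv)
  have "Lambda \<epsilon> (Suc k) x b = x\<^sup>2 * S b - 2 * \<beta> * (2 * (\<Sum>l\<le>k. real (k choose l) * (x\<^sup>2)^(k - l) * (Phi \<beta> (Suc l) b / (-2 * \<beta>))))"
    using eqS[OF Suc.prems] dL by (simp add: \<beta>_def)
  also have "\<dots> = 2 * (\<Sum>l\<le>k. real (k choose l) * (x\<^sup>2)^(k - l) * (x\<^sup>2 * Phi \<beta> l b + Phi \<beta> (Suc l) b))"
    using \<beta> by (simp add: S_def sum_distrib_left sum.distrib[symmetric] field_simps)
  also have "\<dots> = 2 * (\<Sum>l\<le>Suc k. real (Suc k choose l) * (x\<^sup>2)^(Suc k - l) * Phi \<beta> l b)"
    using pascal_sum[of k "x\<^sup>2" "\<lambda>l. Phi \<beta> l b", symmetric] by simp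
  finally show ?case by (simp add: \<beta>_def)
qed

section \<open>Linearity of the adjoint relation\<close>

lemma tstar_rel_zero: "tstar_rel (\<lambda>x. 0) (\<lambda>x. 0)"
  unfolding tstar_rel_def inner_L2_def by (simp add: L2_zero)

lemma tstar_rel_lin:
  assumes 1: "tstar_rel g1 h1" and 2: "tstar_rel g2 h2"
  shows "tstar_rel (\<lambda>x. c * g1 x + g2 x) (\<lambda>x. c * h1 x + h2 x)"
proof -
  have L: "g1 \<in> L2" "h1 \<in> L2" "g2 \<in> L2" "h2 \<in> L2" using 1 2 unfolding tstar_rel_def by auto
  show ?thesis unfolding tstar_rel_def
  proof (intro conjI allI impI L2_add L2_cmult L)
    fix F k assume t: "t_rel F k"
    have FL: "F \<in> L2" and kL: "k \<in> L2" using t_rel_L2[OF t] by auto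
    have "inner_L2 (\<lambda>x. c * g1 x + g2 x) k = cnj c * inner_L2 g1 k + inner_L2 g2 k"
    proof -
      have "inner_L2 (\<lambda>x. c * g1 x + g2 x) k = (LINT x|lborel. cnj c * (cnj (g1 x) * k x) + cnj (g2 x) * k x)"
        unfolding inner_L2_def by (simp add: algebra_simps)
      also have "\<dots> = cnj c * inner_L2 g1 k + inner_L2 g2 k"
        unfolding inner_L2_def using integrable_L2_inner[OF L(1) kL] integrable_L2_inner[OF L(3) kL] by simp
      finally show ?thesis .
    qed
    also have "\<dots> = cnj c * inner_L2 h1 F + inner_L2 h2 F"
      using 1 2 t unfolding tstar_rel_def by auto
    also have "\<dots> = inner_L2 (\<lambda>x. c * h1 x + h2 x) F"
    proof -
      have "inner_L2 (\<lambda>x. c * h1 x + h2 x) F = (LINT x|lborel. cnj c * (cnj (h1 x) * F x) + cnj (h2 x) * F x)"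
        unfolding inner_L2_def by (simp add: algebra_simps)
      also have "\<dots> = cnj c * inner_L2 h1 F + inner_L2 h2 F"
        unfolding inner_L2_def using integrable_L2_inner[OF L(2) FL] integrable_L2_inner[OF L(4) FL] by simp
      finally show ?thesis by simp
    qed
    finally show "inner_L2 (\<lambda>x. c * g1 x + g2 x) k = inner_L2 (\<lambda>x. c * h1 x + h2 x) F" .
  qed
qed

lemma tstar_rel_scale: "tstar_rel g h \<Longrightarrow> tstar_rel (\<lambda>x. c * g x) (\<lambda>x. c * h x)"
  using tstar_rel_lin[OF _ tstar_rel_zero] by simp

lemma tstar_rel_sum:
  assumes "\<And>l. l \<in> S \<Longrightarrow> tstar_rel (G l) (H l)" "finite S"
  shows "tstar_rel (\<lambda>x. \<Sum>l\<in>S. c l * G l x) (\<lambda>x. \<Sum>l\<in>S. c l * H l x)"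
  using assms(2,1)
proof (induction S rule: finite_induct)
  case empty then show ?case by (simp add: tstar_rel_zero)
next
  case (insert a S)
  then show ?case using tstar_rel_lin[of "G a" "H a" _ _ "c a"] by simp
qed

lemma tstar_rel_cong: "tstar_rel g h \<Longrightarrow> (\<And>x. g x = g' x) \<Longrightarrow> (\<And>x. h x = h' x) \<Longrightarrow> tstar_rel g' h'"
proof -
  assume "tstar_rel g h" "\<And>x. g x = g' x" "\<And>x. h x = h' x"
  moreover then have "g = g'" "h = h'" by auto
  ultimately show ?thesis by simp
qed

locale LS =
  fixes \<epsilon> \<alpha> :: real
  assumes eps: "0 < \<epsilon>" and alpha: "0 < \<alpha>" "\<alpha> < 1"
begin

definition \<beta> where "\<beta> = sqrt \<epsilon>"
definition a where "a = \<alpha> / (2 * \<beta>)"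
definition xi where "xi x = exp (- \<alpha> * x\<^sup>2 / (2 * sqrt \<epsilon>))"
definition g where "g j x = complex_of_real (x ^ (2*j+1) * xi x)"
definition psi where "psi j x = x ^ (2*j) * xi x"
definition dpsi where "dpsi j x = (real (2*j) * x ^ (2*j-1) - 2 * a * x ^ (2*j+1)) * xi x"

lemma beta_pos: "\<beta> > 0" using eps by (simp add: \<beta>_def)
lemma a_pos: "a > 0" using beta_pos alpha by (simp add: a_def)
lemma xi_eq: "xi x = exp (- a * x\<^sup>2)" by (simp add: xi_def a_def \<beta>_def)

lemma L2_gaussa: "(\<lambda>x. complex_of_real (x ^ k * xi x)) \<in> L2"
  unfolding xi_eq using L2_gauss[OF a_pos] .

lemma g_L2: "g j \<in> L2" unfolding g_def[abs_def] by (rule L2_gaussa)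

lemma smooth_xi: "smooth xi"
proof -
  have "smooth (\<lambda>x. exp ((- a) * (x ^ 2)))"
    by (intro smooth_comp[OF smooth_exp] smooth_cmult smooth_power smooth_id)
  then show ?thesis by (simp add: xi_eq[abs_def])
qed

lemma d_xi: "(xi has_real_derivative (- 2 * a * x) * xi x) (at x)"
  unfolding xi_eq[abs_def] by (auto intro!: derivative_eq_intros simp: algebra_simps)

lemma d_psi: "(psi j has_real_derivative dpsi j x) (at x)"
proof -
  have "((\<lambda>x. x ^ (2*j) * xi x) has_real_derivative real (2*j) * x ^ (2*j - Suc 0) * xi x + (- 2 * a * x) * xi x * x ^ (2*j)) (at x)"
    by (rule DERIV_mult[OF DERIV_pow d_xi])
  moreover have "real (2*j) * x ^ (2*j - Suc 0) * xi x + (- 2 * a * x) * xi x * x ^ (2*j) = dpsi j x"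
    by (simp add: dpsi_def algebra_simps)
  ultimately show ?thesis by (simp add: psi_def[abs_def])
qed

lemma smooth_psi: "smooth (psi j)"
  unfolding psi_def[abs_def] by (intro smooth_mult smooth_power smooth_id smooth_xi)

lemma psi_L2: "(\<lambda>x. complex_of_real (psi j x)) \<in> L2"
  unfolding psi_def by (rule L2_gaussa)

lemma dpsi_L2: "(\<lambda>x. complex_of_real (dpsi j x)) \<in> L2"
proof -
  have "(\<lambda>x. complex_of_real (real (2*j)) * complex_of_real (x ^ (2*j-1) * xi x)
       - complex_of_real (2 * a) * complex_of_real (x ^ (2*j+1) * xi x)) \<in> L2"
    by (intro L2_diff L2_cmult L2_gaussa)
  moreover have "(\<lambda>x. complex_of_real (real (2*j)) * complex_of_real (x ^ (2*j-1) * xi x)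
       - complex_of_real (2 * a) * complex_of_real (x ^ (2*j+1) * xi x))
     = (\<lambda>x. complex_of_real (dpsi j x))"
    by (rule ext) (simp add: dpsi_def algebra_simps)
  ultimately show ?thesis by simp
qed

lemma tstar_g: "tstar_rel (g j) (\<lambda>x. - \<i> * complex_of_real (dpsi j x))"
  unfolding tstar_rel_def
proof (intro conjI allI impI g_L2)
  show "(\<lambda>x. - \<i> * complex_of_real (dpsi j x)) \<in> L2" by (intro L2_cmult dpsi_L2)
  fix F k assume t: "t_rel F k"
  then obtain G where pG: "p_rel F G" and kL: "k \<in> L2" and kG: "AE x in lborel. k x = G x / complex_of_real x"
    unfolding t_rel_def by blast
  have FL: "F \<in> L2" and GL: "G \<in> L2" using pG unfolding p_rel_def by auto
  have [measurable]: "k \<in> borel_measurable borel" "G \<in> borel_measurable borel" "F \<in> borel_measurable borel"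
    using kL GL FL by (auto intro: L2_meas)
  have [measurable]: "psi j \<in> borel_measurable borel" "xi \<in> borel_measurable borel"
    using cont_meas smooth_cont smooth_psi smooth_xi by blast+
  have "inner_L2 (g j) k = (LINT x|lborel. G x * complex_of_real (psi j x))"
    unfolding inner_L2_def
  proof (rule integral_cong_AE)
    show "(\<lambda>x. cnj (g j x) * k x) \<in> borel_measurable lborel" unfolding g_def by measurable
    show "(\<lambda>x. G x * complex_of_real (psi j x)) \<in> borel_measurable lborel" by measurable
    show "AE x in lborel. cnj (g j x) * k x = G x * complex_of_real (psi j x)"
      using kG AE_lborel_singleton[of 0]
    proof eventually_elim
      case (elim x)
      then show ?case by (simp add: g_def psi_def power_add power_mult field_simps)
    qed
  qed
  also have "\<dots> = \<i> * (LINT x|lborel. F x * complex_of_real (dpsi j x))"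
    by (rule weak_deriv_extend[OF pG smooth_psi d_psi psi_L2 dpsi_L2])
  also have "\<dots> = inner_L2 (\<lambda>x. - \<i> * complex_of_real (dpsi j x)) F"
    unfolding inner_L2_def by (simp add: mult_ac)
  finally show "inner_L2 (g j) k = inner_L2 (\<lambda>x. - \<i> * complex_of_real (dpsi j x)) F" .
qed

lemma dpsi_g: "- \<i> * complex_of_real (dpsi j x) = (\<i> * \<alpha> / \<beta>) * g j x - 2 * \<i> * real j * g (j - 1) x"
proof (cases j)
  case 0
  then show ?thesis using beta_pos by (simp add: dpsi_def g_def a_def field_simps)
next
  case (Suc i)
  have "2 * j - 1 = 2 * (j - 1) + 1" using Suc by simp
  then show ?thesis using beta_pos by (simp add: dpsi_def g_def a_def field_simps)
qed

lemma tstar_g': "tstar_rel (g j) (\<lambda>x. (\<i> * \<alpha> / \<beta>) * g j x - 2 * \<i> * real j * g (j - 1) x)"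
  by (rule tstar_rel_cong[OF tstar_g[of j]]) (rule refl, rule dpsi_g)

end

definition ff :: "nat \<Rightarrow> nat \<Rightarrow> real" where
  "ff m l = (if l \<le> m then fact m / fact (m - l) else 0)"

lemma ff_0: "ff m 0 = 1" by (simp add: ff_def)

lemma ff_Suc: "ff m (Suc l) = ff m l * real (m - l)"
proof (cases "Suc l \<le> m")
  case True
  then have e: "m - l = Suc (m - Suc l)" by simp
  have fe: "fact (m - l) = real (m - l) * fact (m - Suc l)" unfolding e by simp
  have p: "real (m - l) > 0" using True by (simp del: of_nat_diff)
  have "ff m l * real (m - l) = fact m / (real (m - l) * fact (m - Suc l)) * real (m - l)"
    using True by (simp add: ff_def fe del: of_nat_diff)
  also have "\<dots> = fact m / fact (m - Suc l)" using p by (simp add: field_simps del: of_nat_diff)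
  also have "\<dots> = ff m (Suc l)" using True by (simp add: ff_def)
  finally show ?thesis ..
next
  case False
  then show ?thesis by (cases "l = m") (auto simp: ff_def)
qed

context LS begin

definition kap :: "nat \<Rightarrow> nat \<Rightarrow> complex" where
  "kap m l = (-2 * \<i> * \<beta>) ^ l * complex_of_real (ff m l)"

definition Fl :: "nat \<Rightarrow> nat \<Rightarrow> real \<Rightarrow> complex" where
  "Fl m l x = kap m l * g (m - l) x"

lemma kap_Suc: "kap m (Suc l) = kap m l * (-2 * \<i> * \<beta>) * real (m - l)"
  by (simp add: kap_def ff_Suc)

lemma Fl_L2: "Fl m l \<in> L2"
  unfolding Fl_def[abs_def] by (intro L2_cmult g_L2)

lemma tstar_F: "tstar_rel (Fl m l) (\<lambda>x. (1 / \<beta>) * (\<i> * \<alpha> * Fl m l x + Fl m (Suc l) x))"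
proof (rule tstar_rel_cong[OF tstar_rel_scale[OF tstar_g'[of "m - l"], where c="kap m l"]])
  fix x
  show "kap m l * g (m - l) x = Fl m l x" by (simp add: Fl_def)
  show "kap m l * (\<i> * complex_of_real \<alpha> / complex_of_real \<beta> * g (m - l) x -
          2 * \<i> * complex_of_real (real (m - l)) * g (m - l - 1) x) =
        complex_of_real (1 / \<beta>) * (\<i> * complex_of_real \<alpha> * Fl m l x + Fl m (Suc l) x)"
    using beta_pos by (simp add: Fl_def kap_Suc field_simps)
qed

definition Gk :: "nat \<Rightarrow> nat \<Rightarrow> real \<Rightarrow> complex" where
  "Gk m k x = complex_of_real ((1 / \<beta>) ^ k) * (\<Sum>l\<le>k. of_nat (k choose l) * (\<i> * \<alpha>) ^ (k - l) * Fl m l x)"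

lemma Gk_0: "Gk m 0 x = g m x"
  by (simp add: Gk_def Fl_def kap_def ff_0)

lemma tstar_Gk: "tstar_rel (Gk m k) (Gk m (Suc k))"
proof -
  have "tstar_rel (\<lambda>x. \<Sum>l\<le>k. (complex_of_real ((1 / \<beta>) ^ k) * of_nat (k choose l) * (\<i> * \<alpha>) ^ (k - l)) * Fl m l x)
      (\<lambda>x. \<Sum>l\<le>k. (complex_of_real ((1 / \<beta>) ^ k) * of_nat (k choose l) * (\<i> * \<alpha>) ^ (k - l))
             * ((1 / \<beta>) * (\<i> * \<alpha> * Fl m l x + Fl m (Suc l) x)))"
    by (rule tstar_rel_sum[OF tstar_F]) auto
  then show ?thesis
  proof (rule tstar_rel_cong)
    fix x
    show "(\<Sum>l\<le>k. (complex_of_real ((1 / \<beta>) ^ k) * of_nat (k choose l) * (\<i> * \<alpha>) ^ (k - l)) * Fl m l x) = Gk m k x"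
      by (simp add: Gk_def sum_distrib_left mult_ac)
    have "Gk m (Suc k) x = complex_of_real ((1 / \<beta>) ^ Suc k) *
        (\<Sum>l\<le>k. of_nat (k choose l) * (\<i> * \<alpha>) ^ (k - l) * (\<i> * \<alpha> * Fl m l x + Fl m (Suc l) x))"
      unfolding Gk_def by (subst pascal_sum) (rule refl)
    also have "\<dots> = (\<Sum>l\<le>k. (complex_of_real ((1 / \<beta>) ^ k) * of_nat (k choose l) * (\<i> * \<alpha>) ^ (k - l))
             * ((1 / \<beta>) * (\<i> * \<alpha> * Fl m l x + Fl m (Suc l) x)))"
      by (simp add: sum_distrib_left mult_ac)
    finally show "(\<Sum>l\<le>k. (complex_of_real ((1 / \<beta>) ^ k) * of_nat (k choose l) * (\<i> * \<alpha>) ^ (k - l))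
             * ((1 / \<beta>) * (\<i> * \<alpha> * Fl m l x + Fl m (Suc l) x))) = Gk m (Suc k) x" ..
  qed
qed

lemma tstar_pow_Gk: "tstar_pow k (g m) (Gk m k)"
proof (induction k)
  case 0
  have "Gk m 0 = g m" by (rule ext) (simp add: Gk_0)
  then show ?case using g_L2 by simp
next
  case (Suc k)
  then show ?case using tstar_Gk by auto
qed

end

lemma sum_le_eq:
  fixes A B :: nat
  assumes "\<And>l. A < l \<Longrightarrow> t l = 0" "\<And>l. B < l \<Longrightarrow> t l = 0"
  shows "(\<Sum>l\<le>A. t l) = (\<Sum>l\<le>B. t l)"
proof -
  have "(\<Sum>l\<le>A. t l) = (\<Sum>l\<le>max A B. t l)"
  proof (rule sum.mono_neutral_left)
    show "\<forall>i\<in>{..max A B} - {..A}. t i = 0"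
    proof
      fix i assume "i \<in> {..max A B} - {..A}"
      then have "A < i" by auto
      then show "t i = 0" by (rule assms(1))
    qed
  qed auto
  also have "\<dots> = (\<Sum>l\<le>B. t l)"
  proof (rule sum.mono_neutral_right)
    show "\<forall>i\<in>{..max A B} - {..B}. t i = 0"
    proof
      fix i assume "i \<in> {..max A B} - {..B}"
      then have "B < i" by auto
      then show "t i = 0" by (rule assms(2))
    qed
  qed auto
  finally show ?thesis .
qed

lemma i_pow_identity:
  assumes "l \<le> 2*n+1"
  shows "(-1)^n * (\<i> * complex_of_real b) ^ (2*n+1-l) = \<i> * (-\<i>)^l * complex_of_real (b ^ (2*n+1-l))"
proof -
  have e1: "\<i> ^ (2*n+1-l) * \<i> ^ l = \<i> ^ (2*n+1)" using assms by (simp add: power_add[symmetric])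
  have e2: "(-\<i>) ^ l * \<i> ^ l = 1" by (simp add: power_mult_distrib[symmetric])
  have e3: "\<i> ^ (2*n+1) = \<i> * (-1)^n" by (simp add: power_mult)
  have "\<i> ^ (2*n+1-l) = \<i> ^ (2*n+1-l) * ((-\<i>) ^ l * \<i> ^ l)" using e2 by simp
  also have "\<dots> = \<i> * (-1)^n * (-\<i>) ^ l" using e1 e3 by (simp add: mult_ac)
  finally have "\<i> ^ (2*n+1-l) = \<i> * (-1)^n * (-\<i>) ^ l" .
  then have "(-1)^n * \<i> ^ (2*n+1-l) = \<i> * (-\<i>)^l * ((-1)^n * (-1)^n)" by (simp add: mult_ac)
  also have "(-1)^n * (-1)^n = (1::complex)" by (simp add: power_add[symmetric])
  finally show ?thesis by (simp add: power_mult_distrib mult_ac)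
qed

context LS begin

definition dd :: "nat \<Rightarrow> nat \<Rightarrow> complex" where
  "dd N l = (\<Sum>n\<le>N. complex_of_real ((-1)^n / real (2*n+1)) * of_nat (2*n+1 choose l) * (\<i> * \<alpha>) ^ (2*n+1-l))"

definition DD :: "nat \<Rightarrow> complex" where
  "DD l = \<i> * (-\<i>)^l * complex_of_real (U l \<alpha>)"

definition PN :: "nat \<Rightarrow> nat \<Rightarrow> real \<Rightarrow> complex" where
  "PN m N x = (\<Sum>n\<le>N. complex_of_real ((-1)^n / real (2*n+1) * sqrt \<epsilon> ^ (2*n+1)) * Gk m (2*n+1) x)"

definition sfun :: "nat \<Rightarrow> real \<Rightarrow> complex" where
  "sfun m x = (\<Sum>l\<le>m. DD l * Fl m l x)"

lemma Fl_zero: "m < l \<Longrightarrow> Fl m l x = 0"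
  by (simp add: Fl_def kap_def ff_def)

lemma PN_eq: "PN m N x = (\<Sum>l\<le>m. dd N l * Fl m l x)"
proof -
  have "PN m N x = (\<Sum>n\<le>N. \<Sum>l\<le>m. (complex_of_real ((-1)^n / real (2*n+1)) * of_nat (2*n+1 choose l) * (\<i> * \<alpha>) ^ (2*n+1-l)) * Fl m l x)"
    unfolding PN_def
  proof (intro sum.cong refl)
    fix n
    have b0: "sqrt \<epsilon> ^ (2*n+1) * (1 / \<beta>) ^ (2*n+1) = 1"
      using beta_pos unfolding \<beta>_def by (simp add: power_mult_distrib[symmetric])
    have b: "complex_of_real (sqrt \<epsilon> ^ (2*n+1)) * complex_of_real ((1 / \<beta>) ^ (2*n+1)) = 1"
      by (metis b0 of_real_1 of_real_mult)
    have "complex_of_real ((-1)^n / real (2*n+1) * sqrt \<epsilon> ^ (2*n+1)) * Gk m (2*n+1) x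
        = complex_of_real ((-1)^n / real (2*n+1)) * (complex_of_real (sqrt \<epsilon> ^ (2*n+1)) * complex_of_real ((1 / \<beta>) ^ (2*n+1)))
          * (\<Sum>l\<le>2*n+1. of_nat (2*n+1 choose l) * (\<i> * \<alpha>) ^ (2*n+1-l) * Fl m l x)"
      unfolding Gk_def by (simp only: of_real_mult mult_ac)
    also have "\<dots> = complex_of_real ((-1)^n / real (2*n+1)) * (\<Sum>l\<le>2*n+1. of_nat (2*n+1 choose l) * (\<i> * \<alpha>) ^ (2*n+1-l) * Fl m l x)"
      using b by simp
    also have "(\<Sum>l\<le>2*n+1. of_nat (2*n+1 choose l) * (\<i> * \<alpha>) ^ (2*n+1-l) * Fl m l x)
        = (\<Sum>l\<le>m. of_nat (2*n+1 choose l) * (\<i> * \<alpha>) ^ (2*n+1-l) * Fl m l x)"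
      by (rule sum_le_eq) (auto simp: Fl_zero binomial_eq_0)
    finally show "complex_of_real ((-1)^n / real (2*n+1) * sqrt \<epsilon> ^ (2*n+1)) * Gk m (2*n+1) x
        = (\<Sum>l\<le>m. (complex_of_real ((-1)^n / real (2*n+1)) * of_nat (2*n+1 choose l) * (\<i> * \<alpha>) ^ (2*n+1-l)) * Fl m l x)"
      by (simp add: sum_distrib_left mult_ac)
  qed
  also have "\<dots> = (\<Sum>l\<le>m. dd N l * Fl m l x)"
    by (subst sum.swap) (simp add: dd_def sum_distrib_right)
  finally show ?thesis .
qed

lemma dd_lim: "(\<lambda>N. dd N l) \<longlonglongrightarrow> DD l"
proof -
  have a: "\<bar>\<alpha>\<bar> < 1" using alpha by simp
  have "(\<lambda>n. complex_of_real (real (2*n+1 choose l) / real (2*n+1) * \<alpha>^(2*n+1-l))) sums complex_of_real (U l \<alpha>)"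
    by (rule sums_of_real[OF series_n[OF a]])
  then have "(\<lambda>n. \<i> * (-\<i>)^l * complex_of_real (real (2*n+1 choose l) / real (2*n+1) * \<alpha>^(2*n+1-l))) sums DD l"
    unfolding DD_def by (rule sums_mult)
  moreover have eqn: "\<i> * (-\<i>)^l * complex_of_real (real (2*n+1 choose l) / real (2*n+1) * \<alpha>^(2*n+1-l))
      = complex_of_real ((-1)^n / real (2*n+1)) * of_nat (2*n+1 choose l) * (\<i> * \<alpha>) ^ (2*n+1-l)" for n
  proof (cases "l \<le> 2*n+1")
    case True
    have s1: "complex_of_real ((-1)^n / real (2*n+1)) * of_nat (2*n+1 choose l) * (\<i> * \<alpha>) ^ (2*n+1-l)
        = ((-1)^n * (\<i> * complex_of_real \<alpha>) ^ (2*n+1-l)) * (of_nat (2*n+1 choose l) / of_nat (2*n+1))"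
      by (simp add: field_simps)
    have s2: "(-1)^n * (\<i> * complex_of_real \<alpha>) ^ (2*n+1-l) = \<i> * (-\<i>)^l * complex_of_real (\<alpha> ^ (2*n+1-l))"
      by (rule i_pow_identity[OF True])
    have s3: "complex_of_real (real (2*n+1 choose l) / real (2*n+1) * \<alpha>^(2*n+1-l))
        = complex_of_real (\<alpha> ^ (2*n+1-l)) * (of_nat (2*n+1 choose l) / of_nat (2*n+1))"
      by simp
    show ?thesis unfolding s1 s2 s3 by (simp only: mult.assoc)
  next
    case False then show ?thesis by (simp add: binomial_eq_0)
  qed
  ultimately have "(\<lambda>n. complex_of_real ((-1)^n / real (2*n+1)) * of_nat (2*n+1 choose l) * (\<i> * \<alpha>) ^ (2*n+1-l)) sums DD l"
    by (simp only: eqn)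
  then show ?thesis unfolding dd_def sums_def_le .
qed

lemma sfun_eq: "sfun m x = (\<i> / 2) * complex_of_real (Lambda \<epsilon> m x \<alpha> * x * xi x)"
proof -
  have a: "\<bar>\<alpha>\<bar> < 1" using alpha by simp
  have "sfun m x = (\<Sum>l\<le>m. \<i> * complex_of_real (real (m choose l) * (x\<^sup>2)^(m - l) * Phi \<beta> l \<alpha> * x * xi x))"
    unfolding sfun_def
  proof (intro sum.cong refl)
    fix l assume "l \<in> {..m}"
    then have lm: "l \<le> m" by simp
    have ffe: "ff m l = real (m choose l) * fact l" using fact_binomial[OF lm, where 'a=real] lm
      by (simp add: ff_def mult.commute)
    have pe: "x ^ (2 * (m - l) + 1) = (x\<^sup>2)^(m - l) * x" by (simp add: power_mult)
    have ie0: "(-\<i>) * (-2 * \<i> * complex_of_real \<beta>) = complex_of_real (-2 * \<beta>)"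
      by (simp add: complex_eq_iff)
    have ie: "(-\<i>)^l * (-2 * \<i> * complex_of_real \<beta>)^l = complex_of_real ((-2 * \<beta>)^l)"
      by (simp only: power_mult_distrib[symmetric] ie0 of_real_power)
    have "DD l * Fl m l x = \<i> * ((-\<i>)^l * (-2 * \<i> * complex_of_real \<beta>)^l) *
        complex_of_real (U l \<alpha> * ff m l * x ^ (2 * (m - l) + 1) * xi x)"
      by (simp add: DD_def Fl_def kap_def g_def mult_ac)
    also have "\<dots> = \<i> * complex_of_real ((-2 * \<beta>)^l * (U l \<alpha> * ff m l * x ^ (2 * (m - l) + 1) * xi x))"
      unfolding ie by (simp only: of_real_mult[symmetric] mult.assoc)
    also have "(-2 * \<beta>)^l * (U l \<alpha> * ff m l * x ^ (2 * (m - l) + 1) * xi x)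
        = real (m choose l) * (x\<^sup>2)^(m - l) * Phi \<beta> l \<alpha> * x * xi x"
      unfolding ffe pe Phi_def by (simp add: mult_ac)
    finally show "DD l * Fl m l x = \<i> * complex_of_real (real (m choose l) * (x\<^sup>2)^(m - l) * Phi \<beta> l \<alpha> * x * xi x)" .
  qed
  also have "\<dots> = \<i> * complex_of_real ((\<Sum>l\<le>m. real (m choose l) * (x\<^sup>2)^(m - l) * Phi \<beta> l \<alpha>) * x * xi x)"
    by (simp add: sum_distrib_left sum_distrib_right)
  also have "(\<Sum>l\<le>m. real (m choose l) * (x\<^sup>2)^(m - l) * Phi \<beta> l \<alpha>) = Lambda \<epsilon> m x \<alpha> / 2"
    using Lambda_closed[OF eps a, of m x] by (simp add: \<beta>_def)
  finally show ?thesis by simp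
qed

lemma sfun_L2: "sfun m \<in> L2"
  unfolding sfun_def[abs_def] by (intro L2_sum L2_cmult Fl_L2)

lemma PN_L2: "PN m N \<in> L2"
  unfolding PN_def[abs_def] using tstar_pow_L2[OF tstar_pow_Gk] by (intro L2_sum L2_cmult) auto

lemma PN_conv: "(\<lambda>N. norm_L2 (\<lambda>x. PN m N x - sfun m x)) \<longlonglongrightarrow> 0"
proof -
  have e0: "(\<lambda>N. dd N l - DD l) \<longlonglongrightarrow> 0" for l using dd_lim[of l] by (simp add: LIM_zero)
  have "\<forall>l. \<exists>K>0. \<forall>N. norm (dd N l - DD l) \<le> K"
    using convergent_imp_Bseq[OF convergentI[OF e0]] by (auto elim!: BseqE)
  then obtain K where K: "\<And>l. K l > 0" "\<And>l N. norm (dd N l - DD l) \<le> K l" by metis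
  have [measurable]: "Fl m l \<in> borel_measurable borel" for l using Fl_L2 by (rule L2_meas)
  have diff: "PN m N x - sfun m x = (\<Sum>l\<le>m. (dd N l - DD l) * Fl m l x)" for N x
    by (simp add: PN_eq sfun_def sum_subtractf algebra_simps)
  define W where "W x = (\<Sum>l\<le>m. K l * cmod (Fl m l x))" for x
  have WL: "(\<lambda>x. complex_of_real (W x)) \<in> L2"
  proof -
    have "(\<lambda>x. \<Sum>l\<le>m. complex_of_real (K l) * complex_of_real (cmod (Fl m l x))) \<in> L2"
      by (intro L2_sum L2_cmult L2_bound[OF Fl_L2]) auto
    then show ?thesis by (simp add: W_def)
  qed
  note DC = integral_dominated_convergence[where f="\<lambda>x. 0::real" and s="\<lambda>N x. (cmod (PN m N x - sfun m x))\<^sup>2"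
     and M=lborel and w="\<lambda>x. (W x)\<^sup>2"]
  have p1: "(\<lambda>x. 0::real) \<in> borel_measurable lborel" by simp
  have p2: "(\<lambda>x. (cmod (PN m N x - sfun m x))\<^sup>2) \<in> borel_measurable lborel" for N
      unfolding diff by measurable
  have p3: "integrable lborel (\<lambda>x. (W x)\<^sup>2)" using L2_sq[OF WL] by simp
  have p4: "AE x in lborel. (\<lambda>N. (cmod (PN m N x - sfun m x))\<^sup>2) \<longlonglongrightarrow> 0"
    proof (intro AE_I2)
      fix x
      have h0: "(\<lambda>N. \<Sum>l\<le>m. (dd N l - DD l) * Fl m l x) \<longlonglongrightarrow> (\<Sum>l\<le>m. 0 * Fl m l x)"
        by (rule tendsto_sum, rule tendsto_mult[OF e0 tendsto_const])
      have "(\<lambda>N. (cmod (\<Sum>l\<le>m. (dd N l - DD l) * Fl m l x))\<^sup>2) \<longlonglongrightarrow> (cmod (\<Sum>l\<le>m. 0 * Fl m l x))\<^sup>2"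
        using tendsto_power[OF tendsto_norm[OF h0], of 2] by simp
      then show "(\<lambda>N. (cmod (PN m N x - sfun m x))\<^sup>2) \<longlonglongrightarrow> 0" by (simp add: diff)
    qed
  have p5: "AE x in lborel. norm ((cmod (PN m N x - sfun m x))\<^sup>2) \<le> (W x)\<^sup>2" for N
    proof (intro AE_I2)
      fix x
      have "cmod (\<Sum>l\<le>m. (dd N l - DD l) * Fl m l x) \<le> (\<Sum>l\<le>m. cmod ((dd N l - DD l) * Fl m l x))"
        by (rule norm_sum)
      also have "\<dots> \<le> W x" unfolding W_def
        by (intro sum_mono) (auto simp: norm_mult intro!: mult_right_mono K(2))
      finally have "cmod (PN m N x - sfun m x) \<le> W x" by (simp add: diff)
      then show "norm ((cmod (PN m N x - sfun m x))\<^sup>2) \<le> (W x)\<^sup>2"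
        by (simp add: power_mono)
    qed
  have lim: "(\<lambda>N. LINT x|lborel. (cmod (PN m N x - sfun m x))\<^sup>2) \<longlonglongrightarrow> 0"
    using DC[OF p1 p2 p3 p4 p5] by simp
  then have "(\<lambda>N. sqrt (LINT x|lborel. (cmod (PN m N x - sfun m x))\<^sup>2)) \<longlonglongrightarrow> sqrt 0"
    by (intro tendsto_real_sqrt) simp
  then show ?thesis by (simp add: norm_L2_def)
qed

end

context LS begin

definition H :: "nat \<Rightarrow> real \<Rightarrow> complex" where
  "H m x = - (\<i> / complex_of_real (2 * sqrt \<epsilon>)) * complex_of_real (Lambda \<epsilon> m x \<alpha> * x * xi x)"

lemma H_eq: "H m x = - complex_of_real (1 / sqrt \<epsilon>) * sfun m x"
  using eps by (simp add: H_def sfun_eq field_simps)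

lemma H_L2: "H m \<in> L2"
proof -
  have "(\<lambda>x. - complex_of_real (1 / sqrt \<epsilon>) * sfun m x) \<in> L2" by (intro L2_cmult sfun_L2)
  moreover have "(\<lambda>x. - complex_of_real (1 / sqrt \<epsilon>) * sfun m x) = H m" by (rule ext) (simp add: H_eq)
  ultimately show ?thesis by simp
qed

lemma g_odd: "g m \<in> L2_odd"
  unfolding L2_odd_def using g_L2 by (auto simp: g_def xi_def)

lemma S_main: "S_rel \<epsilon> (g m) (H m)"
  unfolding S_rel_def
proof (intro conjI g_odd H_L2 exI[of _ "\<lambda>n. Gk m (2*n+1)"] allI bexI[of _ "sfun m"] sfun_L2)
  show "tstar_pow (2 * n + 1) (g m) (Gk m (2 * n + 1))" for n by (rule tstar_pow_Gk)
  show "(\<lambda>N. norm_L2 (\<lambda>x. (\<Sum>n\<le>N. complex_of_real ((- 1) ^ n / real (2 * n + 1) * sqrt \<epsilon> ^ (2 * n + 1)) *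
              Gk m (2 * n + 1) x) - sfun m x)) \<longlonglongrightarrow> 0"
    using PN_conv[of m] unfolding PN_def .
  show "AE x in lborel. H m x = - complex_of_real (1 / sqrt \<epsilon>) * sfun m x"
    by (intro AE_I2 H_eq)
qed

lemma S_unique:
  assumes S: "S_rel \<epsilon> (g m) h"
  shows "AE x in lborel. h x = H m x"
proof -
  from S obtain G' s' where hL: "h \<in> L2" and tp: "\<And>n. tstar_pow (2*n+1) (g m) (G' n)" and sL: "s' \<in> L2"
    and conv: "(\<lambda>N. norm_L2 (\<lambda>x. (\<Sum>n\<le>N. complex_of_real ((-1)^n / real (2*n+1) * sqrt \<epsilon> ^ (2*n+1)) * G' n x) - s' x)) \<longlonglongrightarrow> 0"
    and hs: "AE x in lborel. h x = - complex_of_real (1 / sqrt \<epsilon>) * s' x"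
    unfolding S_rel_def by blast
  have GL: "G' n \<in> L2" for n using tstar_pow_L2[OF tp[of n]] by simp
  have [measurable]: "G' n \<in> borel_measurable borel" for n using GL by (rule L2_meas)
  have [measurable]: "s' \<in> borel_measurable borel" using sL by (rule L2_meas)
  have [measurable]: "PN m N \<in> borel_measurable borel" for N using PN_L2 by (rule L2_meas)
  have aeG: "AE x in lborel. \<forall>n. G' n x = Gk m (2*n+1) x"
    unfolding AE_all_countable
    by (intro allI tstar_pow_unique[OF tp tstar_pow_Gk]) simp
  have conv2: "(\<lambda>N. norm_L2 (\<lambda>x. PN m N x - s' x)) \<longlonglongrightarrow> 0"
  proof -
    have "norm_L2 (\<lambda>x. (\<Sum>n\<le>N. complex_of_real ((-1)^n / real (2*n+1) * sqrt \<epsilon> ^ (2*n+1)) * G' n x) - s' x)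
        = norm_L2 (\<lambda>x. PN m N x - s' x)" for N
      unfolding norm_L2_def
    proof (intro arg_cong[where f=sqrt] integral_cong_AE)
      show "(\<lambda>x. (cmod ((\<Sum>n\<le>N. complex_of_real ((-1)^n / real (2*n+1) * sqrt \<epsilon> ^ (2*n+1)) * G' n x) - s' x))\<^sup>2)
          \<in> borel_measurable lborel" by measurable
      show "(\<lambda>x. (cmod (PN m N x - s' x))\<^sup>2) \<in> borel_measurable lborel" by measurable
      show "AE x in lborel. (cmod ((\<Sum>n\<le>N. complex_of_real ((-1)^n / real (2*n+1) * sqrt \<epsilon> ^ (2*n+1)) * G' n x) - s' x))\<^sup>2
          = (cmod (PN m N x - s' x))\<^sup>2"
        using aeG by eventually_elim (simp add: PN_def)
    qed
    then show ?thesis using conv by simp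
  qed
  have "AE x in lborel. sfun m x = s' x"
    by (rule L2_limit_unique[OF PN_L2 sfun_L2 sL PN_conv conv2])
  then show ?thesis using hs
    by eventually_elim (simp add: H_eq)
qed

lemma inner_final:
  assumes S: "S_rel \<epsilon> (g m) h"
  shows "inner_L2 (g n) h = - (\<i> / complex_of_real (2 * sqrt \<epsilon>))
             * complex_of_real (LINT x|lborel. xi x * x ^ (2*n+2) * Lambda \<epsilon> m x \<alpha> * xi x)"
proof -
  have hL: "h \<in> L2" using S unfolding S_rel_def by blast
  have "inner_L2 (g n) h = inner_L2 (g n) (H m)"
    by (rule inner_L2_cong_AE[OF g_L2 g_L2 hL H_L2]) (auto simp: S_unique[OF S])
  also have "\<dots> = (LINT x|lborel. - (\<i> / complex_of_real (2 * sqrt \<epsilon>)) *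
        complex_of_real (xi x * x ^ (2*n+2) * Lambda \<epsilon> m x \<alpha> * xi x))"
    unfolding inner_L2_def
    by (intro Bochner_Integration.integral_cong refl) (simp add: g_def H_def mult_ac)
  also have "\<dots> = - (\<i> / complex_of_real (2 * sqrt \<epsilon>)) * complex_of_real (LINT x|lborel. xi x * x ^ (2*n+2) * Lambda \<epsilon> m x \<alpha> * xi x)"
    by (simp only: integral_mult_right_zero integral_complex_of_real)
  finally show ?thesis .
qed

end

theorem lemma3p7:
  fixes \<epsilon> \<alpha> :: real and \<xi> :: "real \<Rightarrow> real" and f :: "nat \<Rightarrow> real \<Rightarrow> complex" and m :: nat
  assumes "0 < \<epsilon>" and "\<epsilon> \<le> 1"
    and "0 < \<alpha>" and "\<alpha> < 1"
    and "\<xi> = (\<lambda>x. exp (- \<alpha> * x\<^sup>2 / (2 * sqrt \<epsilon>)))"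
    and "f = (\<lambda>k x. of_real (x ^ (2*k+1) * \<xi> x))"
  shows "(\<exists>h. S_rel \<epsilon> (f m) h)
    \<and> S_rel \<epsilon> (f m) (\<lambda>x. - (\<i> / of_real (2 * sqrt \<epsilon>)) * of_real (Lambda \<epsilon> m x \<alpha> * x * \<xi> x))
    \<and> (\<forall>n h. S_rel \<epsilon> (f m) h \<longrightarrow>
         inner_L2 (f n) h
           = - (\<i> / of_real (2 * sqrt \<epsilon>))
             * of_real (LINT x|lborel. \<xi> x * x ^ (2*n+2) * Lambda \<epsilon> m x \<alpha> * \<xi> x))"
  proof -
  interpret L: LS \<epsilon> \<alpha> using assms(1,3,4) by unfold_locales auto
  have xi: "\<xi> = L.xi" using assms(5) by (simp add: L.xi_def[abs_def])
  have fg: "f = L.g" using assms(6) by (simp add: L.g_def[abs_def] xi)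
  have H: "(\<lambda>x. - (\<i> / complex_of_real (2 * sqrt \<epsilon>)) * complex_of_real (Lambda \<epsilon> m x \<alpha> * x * \<xi> x)) = L.H m"
    by (rule ext) (simp add: L.H_def xi)
  show ?thesis unfolding fg H unfolding xi using L.S_main L.inner_final by blast
qed

end
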